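(* Let $(\Lambda,d)$ be a $k$-graph and let $\overline{\Lambda}$ be the extension of $\Lambda$ described in the context (objects $\Lambda^0\sqcup\widetilde{V_\Lambda}$, morphisms $\Lambda\sqcup\widetilde{P_\Lambda}$, with the range, source, composition and identities given there). Then $\overline{\Lambda}$ is a category.
   Context: A $k$-graph $(\Lambda,d)$ is a countable category with a degree functor $d:\Lambda\to\mathbb{N}^k$ satisfying unique factorization (if $d(\lambda)=m+n$ there are unique $\mu,\nu$ with $\lambda=\mu\nu$, $d(\mu)=m$, $d(\nu)=n$); $\Lambda^0$ vertices, $r,s$ range/source, $v\Lambda^n=\{\lambda:r(\lambda)=v,d(\lambda)=n\}$; $e_i$ standard basis, $\le$ coordinatewise ($m\not\le n$ means not $m\le n$), $\vee,\wedge$ coordinatewise max/min. For $m\in(\mathbb{N}\cup\{\infty\})^k$, $\Omega_{k,m}$ has objects $\{p\in\mathbb{N}^k:p\le m\}$, morphisms $(p,q)$, $p\le q\le m$, $r(p,q)=p$, $s(p,q)=q$, $d(p,q)=q-p$. A graph morphism $x:\Omega_{k,m}\to\Lambda$ is a degree-preserving functor; $d(x)=m$, $x(a,b)=x((a,b))$, $x(a)=x(a,a)$. It is a boundary path if there is $n_x\in\mathbb{N}^k$, $n_x\le d(x)$, with $x(p)\Lambda^{e_i}=\emptyset$ whenever $p\in\mathbb{N}^k$, $n_x\le p\le d(x)$, $p_i=d(x)_i$; $\Lambda^{\le\infty}$ is the set of boundary paths. $\sigma^px(a,b)=x(a+p,b+p)$ on $\Omega_{k,d(x)-p}$ ($p\in\mathbb{N}^k$,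 $p\le d(x)$); for $\lambda$ with $s(\lambda)=x(0)$, $\lambda x$ is the graph morphism on $\Omega_{k,d(\lambda)+d(x)}$ with $(\lambda x)(0,d(\lambda))=\lambda$, $(\lambda x)(0,p)=\lambda x(0,p-d(\lambda))$. Let $V_\Lambda=\{(x;m):x\in\Lambda^{\le\infty},m\in\mathbb{N}^k,m\not\le d(x)\}$ with equivalence $(x;m)\approx(y;p)$ iff $x(m\wedge d(x))=y(p\wedge d(y))$ and $m-m\wedge d(x)=p-p\wedge d(y)$; classes $[x;m]$, quotient $\widetilde{V_\Lambda}$. Let $P_\Lambda=\{(x;(m,n)):x\in\Lambda^{\le\infty},m,n\in\mathbb{N}^k,m\le n,n\not\le d(x)\}$ with equivalence $(x;(m,n))\sim(y;(p,q))$ iff $x(m\wedge d(x),n\wedge d(x))=y(p\wedge d(y),q\wedge d(y))$, $m-m\wedge d(x)=p-p\wedge d(y)$, $n-m=q-p$; classes $[x;(m,n)]$, quotient $\widetilde{P_\Lambda}$. The extension $\overline{\Lambda}$ has objects $\Lambda^0\sqcup\widetilde{V_\Lambda}$ and morphisms $\Lambda\sqcup\widetilde{P_\Lambda}$; on $\Lambda$ range, source, composition and identities are those of $\Lambda$; $\overline r([x;(m,n)])=x(m)$ if $m\le d(x)$ and $=[x;m]$ otherwise; $\overline s([x;(m,n)])=[x;n]$; the identity at $[x;m]$ is $[x;(m,m)]$; for $\lambda\in\Lambda$ with $s(\lambda)=\overline r([x;(m,n)])$, $\lambda[x;(m,n)]=[\lambda\sigma^mx;(0,d(\lambda)+n-m)]$;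 for $\overline s([x;(m,n)])=\overline r([y;(p,q)])$, $[x;(m,n)][y;(p,q)]=[z;(m,n+q-p)]$ with $z=x(0,n\wedge d(x))\sigma^{p\wedge d(y)}y$. (These maps are well defined on equivalence classes.) The degree $\overline d$ equals $d$ on $\Lambda$ and $\overline d([x;(m,n)])=n-m$. *)

theory Defs
  imports Main "HOL-Library.Function_Algebras" "HOL-Library.Extended_Nat"
    "HOL-Library.Countable_Set"
begin

section \<open>Categories (composition written in path order: cmp f g needs s f = r g)\<close>

definition category ::
  "'o set \<Rightarrow> 'a set \<Rightarrow> ('a \<Rightarrow> 'o) \<Rightarrow> ('a \<Rightarrow> 'o) \<Rightarrow> ('o \<Rightarrow> 'a) \<Rightarrow> ('a \<Rightarrow> 'a \<Rightarrow> 'a) \<Rightarrow> bool"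
where
  "category Ob Mor r s idm cmp \<longleftrightarrow>
     (\<forall>f\<in>Mor. r f \<in> Ob \<and> s f \<in> Ob) \<and>
     (\<forall>a\<in>Ob. idm a \<in> Mor \<and> r (idm a) = a \<and> s (idm a) = a) \<and>
     (\<forall>f\<in>Mor. \<forall>g\<in>Mor. s f = r g \<longrightarrow>
         cmp f g \<in> Mor \<and> r (cmp f g) = r f \<and> s (cmp f g) = s g) \<and>
     (\<forall>f\<in>Mor. \<forall>g\<in>Mor. \<forall>h\<in>Mor. s f = r g \<and> s g = r h \<longrightarrow>
         cmp (cmp f g) h = cmp f (cmp g h)) \<and>
     (\<forall>f\<in>Mor. cmp (idm (r f)) f = f \<and> cmp f (idm (s f)) = f)"

section \<open>k-graphs; k = CARD('k), degrees in 'k \<Rightarrow> nat (pointwise order)\<close>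

definition ebasis :: "'k \<Rightarrow> ('k \<Rightarrow> nat)" where
  "ebasis i = (\<lambda>j. if j = i then 1 else 0)"

definition kgraph ::
  "'v set \<Rightarrow> 'm set \<Rightarrow> ('m \<Rightarrow> 'v) \<Rightarrow> ('m \<Rightarrow> 'v) \<Rightarrow> ('v \<Rightarrow> 'm) \<Rightarrow> ('m \<Rightarrow> 'm \<Rightarrow> 'm)
    \<Rightarrow> ('m \<Rightarrow> ('k::finite \<Rightarrow> nat)) \<Rightarrow> bool"
where
  "kgraph V L r s idm cmp d \<longleftrightarrow>
     category V L r s idm cmp \<and> countable V \<and> countable L \<and>
     (\<forall>v\<in>V. d (idm v) = 0) \<and>
     (\<forall>f\<in>L. \<forall>g\<in>L. s f = r g \<longrightarrow> d (cmp f g) = d f + d g) \<and>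
     (\<forall>l\<in>L. \<forall>m n. d l = m + n \<longrightarrow>
        (\<exists>!(f, g). f \<in> L \<and> g \<in> L \<and> s f = r g \<and> l = cmp f g \<and> d f = m \<and> d g = n))"

text \<open>A graph morphism x : \<Omega>_{k,m} \<rightarrow> \<Lambda> is represented by the pair (m, f) with
  f p q = x(p,q) for p \<le> q \<le> m, and f p q = undefined otherwise (canonical form).\<close>

type_synonym ('k, 'm) gpath = "('k \<Rightarrow> enat) \<times> (('k \<Rightarrow> nat) \<Rightarrow> ('k \<Rightarrow> nat) \<Rightarrow> 'm)"

definition leq_en :: "('k \<Rightarrow> nat) \<Rightarrow> ('k \<Rightarrow> enat) \<Rightarrow> bool" where
  "leq_en p m \<longleftrightarrow> (\<forall>i. enat (p i) \<le> m i)"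

definition in_Omega :: "('k \<Rightarrow> enat) \<Rightarrow> ('k \<Rightarrow> nat) \<Rightarrow> ('k \<Rightarrow> nat) \<Rightarrow> bool" where
  "in_Omega m p q \<longleftrightarrow> p \<le> q \<and> leq_en q m"

definition graph_morphism ::
  "'v set \<Rightarrow> 'm set \<Rightarrow> ('m \<Rightarrow> 'v) \<Rightarrow> ('m \<Rightarrow> 'v) \<Rightarrow> ('v \<Rightarrow> 'm) \<Rightarrow> ('m \<Rightarrow> 'm \<Rightarrow> 'm)
    \<Rightarrow> ('m \<Rightarrow> ('k::finite \<Rightarrow> nat)) \<Rightarrow> ('k, 'm) gpath \<Rightarrow> bool"
where
  "graph_morphism V L r s idm cmp d x \<longleftrightarrow>
     (\<forall>p q. \<not> in_Omega (fst x) p q \<longrightarrow> snd x p q = undefined) \<and>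
     (\<forall>p q. in_Omega (fst x) p q \<longrightarrow>
        snd x p q \<in> L \<and> d (snd x p q) = q - p \<and>
        r (snd x p q) = r (snd x p p) \<and> s (snd x p q) = r (snd x q q)) \<and>
     (\<forall>p. leq_en p (fst x) \<longrightarrow> snd x p p = idm (r (snd x p p))) \<and>
     (\<forall>p q t. p \<le> q \<and> in_Omega (fst x) q t \<longrightarrow>
        cmp (snd x p q) (snd x q t) = snd x p t)"

definition gvert :: "('m \<Rightarrow> 'v) \<Rightarrow> ('k, 'm) gpath \<Rightarrow> ('k \<Rightarrow> nat) \<Rightarrow> 'v" where
  "gvert r x p = r (snd x p p)"

definition boundary_paths ::
  "'v set \<Rightarrow> 'm set \<Rightarrow> ('m \<Rightarrow> 'v) \<Rightarrow> ('m \<Rightarrow> 'v) \<Rightarrow> ('v \<Rightarrow> 'm) \<Rightarrow> ('m \<Rightarrow> 'm \<Rightarrow> 'm)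
    \<Rightarrow> ('m \<Rightarrow> ('k::finite \<Rightarrow> nat)) \<Rightarrow> ('k, 'm) gpath set"
where
  "boundary_paths V L r s idm cmp d =
     {x. graph_morphism V L r s idm cmp d x \<and>
         (\<exists>nx. leq_en nx (fst x) \<and>
            (\<forall>p i. nx \<le> p \<and> leq_en p (fst x) \<and> enat (p i) = fst x i \<longrightarrow>
               \<not> (\<exists>l\<in>L. r l = gvert r x p \<and> d l = ebasis i)))}"

definition meet_en :: "('k \<Rightarrow> nat) \<Rightarrow> ('k \<Rightarrow> enat) \<Rightarrow> ('k \<Rightarrow> nat)" where
  "meet_en m D = (\<lambda>i. if enat (m i) \<le> D i then m i else the_enat (D i))"

definition shift :: "('k \<Rightarrow> nat) \<Rightarrow> ('k, 'm) gpath \<Rightarrow> ('k, 'm) gpath" where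
  "shift p x = (let D = (\<lambda>i. fst x i - enat (p i)) in
     (D, \<lambda>a b. if in_Omega D a b then snd x (a + p) (b + p) else undefined))"

definition seg ::
  "'m set \<Rightarrow> ('m \<Rightarrow> 'v) \<Rightarrow> ('m \<Rightarrow> 'v) \<Rightarrow> ('m \<Rightarrow> 'm \<Rightarrow> 'm) \<Rightarrow> ('m \<Rightarrow> ('k \<Rightarrow> nat))
     \<Rightarrow> 'm \<Rightarrow> ('k \<Rightarrow> nat) \<Rightarrow> ('k \<Rightarrow> nat) \<Rightarrow> 'm"
where
  "seg L r s cmp d w p q = (THE nu. \<exists>mu rho. mu \<in> L \<and> nu \<in> L \<and> rho \<in> L \<and>
      s mu = r nu \<and> s nu = r rho \<and> w = cmp (cmp mu nu) rho \<and> d mu = p \<and> d nu = q - p)"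

text \<open>\<lambda> x for s(\<lambda>) = x(0): (\<lambda>x)(0, q') = \<lambda> x(0, q' - d \<lambda>) for q' \<ge> d \<lambda>, and the
  remaining values are the corresponding factors (graph morphism determined by these).\<close>
definition prepend ::
  "'m set \<Rightarrow> ('m \<Rightarrow> 'v) \<Rightarrow> ('m \<Rightarrow> 'v) \<Rightarrow> ('m \<Rightarrow> 'm \<Rightarrow> 'm) \<Rightarrow> ('m \<Rightarrow> ('k \<Rightarrow> nat))
     \<Rightarrow> 'm \<Rightarrow> ('k, 'm) gpath \<Rightarrow> ('k, 'm) gpath"
where
  "prepend L r s cmp d l x = (let D = (\<lambda>i. enat (d l i) + fst x i) in
     (D, \<lambda>p q. if in_Omega D p q
                then seg L r s cmp d (cmp l (snd x 0 (sup q (d l) - d l))) p q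
                else undefined))"

definition Vset :: "('k, 'm) gpath set \<Rightarrow> (('k, 'm) gpath \<times> ('k \<Rightarrow> nat)) set" where
  "Vset B = {(x, m). x \<in> B \<and> \<not> leq_en m (fst x)}"

definition Vrel :: "('m \<Rightarrow> 'v) \<Rightarrow> ('k, 'm) gpath set
     \<Rightarrow> ((('k, 'm) gpath \<times> ('k \<Rightarrow> nat)) \<times> (('k, 'm) gpath \<times> ('k \<Rightarrow> nat))) set" where
  "Vrel r B = {((x, m), (y, p)). (x, m) \<in> Vset B \<and> (y, p) \<in> Vset B \<and>
      gvert r x (meet_en m (fst x)) = gvert r y (meet_en p (fst y)) \<and>
      m - meet_en m (fst x) = p - meet_en p (fst y)}"

definition Pset :: "('k, 'm) gpath set
     \<Rightarrow> (('k, 'm) gpath \<times> (('k \<Rightarrow> nat) \<times> ('k \<Rightarrow> nat))) set" where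
  "Pset B = {(x, (m, n)). x \<in> B \<and> m \<le> n \<and> \<not> leq_en n (fst x)}"

definition Prel :: "('k, 'm) gpath set
     \<Rightarrow> ((('k, 'm) gpath \<times> (('k \<Rightarrow> nat) \<times> ('k \<Rightarrow> nat)))
        \<times> (('k, 'm) gpath \<times> (('k \<Rightarrow> nat) \<times> ('k \<Rightarrow> nat)))) set" where
  "Prel B = {((x, (m, n)), (y, (p, q))). (x, (m, n)) \<in> Pset B \<and> (y, (p, q)) \<in> Pset B \<and>
      snd x (meet_en m (fst x)) (meet_en n (fst x)) = snd y (meet_en p (fst y)) (meet_en q (fst y)) \<and>
      m - meet_en m (fst x) = p - meet_en p (fst y) \<and>
      n - m = q - p}"

context
  fixes V :: "'v set" and L :: "'m set" and r s :: "'m \<Rightarrow> 'v" and idm :: "'v \<Rightarrow> 'm"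
    and cmp :: "'m \<Rightarrow> 'm \<Rightarrow> 'm" and d :: "'m \<Rightarrow> ('k::finite \<Rightarrow> nat)"
begin

abbreviation "BP \<equiv> boundary_paths V L r s idm cmp d"

definition ext_obj :: "('v + (('k, 'm) gpath \<times> ('k \<Rightarrow> nat)) set) set" where
  "ext_obj = V <+> (Vset BP // Vrel r BP)"

definition ext_mor ::
  "('m + (('k, 'm) gpath \<times> (('k \<Rightarrow> nat) \<times> ('k \<Rightarrow> nat))) set) set" where
  "ext_mor = L <+> (Pset BP // Prel BP)"

definition vclass where "vclass e = Vrel r BP `` {e}"
definition pclass where "pclass e = Prel BP `` {e}"

definition ext_r where
  "ext_r f = (case f of Inl l \<Rightarrow> Inl (r l)
     | Inr C \<Rightarrow> (let (x, (m, n)) = (SOME e. e \<in> C) in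
                 if leq_en m (fst x) then Inl (gvert r x m) else Inr (vclass (x, m))))"

definition ext_s where
  "ext_s f = (case f of Inl l \<Rightarrow> Inl (s l)
     | Inr C \<Rightarrow> (let (x, (m, n)) = (SOME e. e \<in> C) in Inr (vclass (x, n))))"

definition ext_id where
  "ext_id a = (case a of Inl v \<Rightarrow> Inl (idm v)
     | Inr C \<Rightarrow> (let (x, m) = (SOME e. e \<in> C) in Inr (pclass (x, (m, m)))))"

definition ext_comp where
  "ext_comp f g = (case (f, g) of
       (Inl l, Inl l') \<Rightarrow> Inl (cmp l l')
     | (Inl l, Inr C) \<Rightarrow> (let (x, (m, n)) = (SOME e. e \<in> C) in
          Inr (pclass (prepend L r s cmp d l (shift m x), (0, d l + n - m))))
     | (Inr C, Inr D) \<Rightarrow> (let (x, (m, n)) = (SOME e. e \<in> C); (y, (p, q)) = (SOME e. e \<in> D) in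
          Inr (pclass (prepend L r s cmp d (snd x 0 (meet_en n (fst x)))
                         (shift (meet_en p (fst y)) y), (m, n + q - p))))
     | (Inr C, Inl l) \<Rightarrow> undefined)"

end

end

theory Submission
  imports Defs
begin

locale kg =
  fixes V :: "'v set" and L :: "'m set" and r s :: "'m \<Rightarrow> 'v" and idm :: "'v \<Rightarrow> 'm"
    and cmp :: "'m \<Rightarrow> 'm \<Rightarrow> 'm" and d :: "'m \<Rightarrow> ('k::finite \<Rightarrow> nat)"
  assumes KG: "kgraph V L r s idm cmp d"
begin

lemma cat: "category V L r s idm cmp" using KG by (simp add: kgraph_def)
lemma rV: "f \<in> L \<Longrightarrow> r f \<in> V" using cat by (simp add: category_def)
lemma sV: "f \<in> L \<Longrightarrow> s f \<in> V" using cat by (simp add: category_def)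
lemma idL: "v \<in> V \<Longrightarrow> idm v \<in> L" using cat by (simp add: category_def)
lemma r_id: "v \<in> V \<Longrightarrow> r (idm v) = v" using cat by (simp add: category_def)
lemma s_id: "v \<in> V \<Longrightarrow> s (idm v) = v" using cat by (simp add: category_def)
lemma cmpL: "f \<in> L \<Longrightarrow> g \<in> L \<Longrightarrow> s f = r g \<Longrightarrow> cmp f g \<in> L"
  using cat by (simp add: category_def)
lemma r_cmp: "f \<in> L \<Longrightarrow> g \<in> L \<Longrightarrow> s f = r g \<Longrightarrow> r (cmp f g) = r f"
  using cat by (simp add: category_def)
lemma s_cmp: "f \<in> L \<Longrightarrow> g \<in> L \<Longrightarrow> s f = r g \<Longrightarrow> s (cmp f g) = s g"
  using cat by (simp add: category_def)
lemma assoc: "f \<in> L \<Longrightarrow> g \<in> L \<Longrightarrow> h \<in> L \<Longrightarrow> s f = r g \<Longrightarrow> s g = r h \<Longrightarrow>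
   cmp (cmp f g) h = cmp f (cmp g h)"
  using cat unfolding category_def by blast
lemma id_l: "f \<in> L \<Longrightarrow> cmp (idm (r f)) f = f" using cat by (simp add: category_def)
lemma id_r: "f \<in> L \<Longrightarrow> cmp f (idm (s f)) = f" using cat by (simp add: category_def)
lemma d_id: "v \<in> V \<Longrightarrow> d (idm v) = 0" using KG by (simp add: kgraph_def)
lemma d_cmp: "f \<in> L \<Longrightarrow> g \<in> L \<Longrightarrow> s f = r g \<Longrightarrow> d (cmp f g) = d f + d g"
  using KG by (simp add: kgraph_def)

lemma uf_ex: "l \<in> L \<Longrightarrow> d l = m + n \<Longrightarrow>
   \<exists>f g. f \<in> L \<and> g \<in> L \<and> s f = r g \<and> l = cmp f g \<and> d f = m \<and> d g = n"
proof -
  assume a: "l \<in> L" "d l = m + n"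
  have "\<exists>!(f, g). f \<in> L \<and> g \<in> L \<and> s f = r g \<and> l = cmp f g \<and> d f = m \<and> d g = n"
    using KG a unfolding kgraph_def by blast
  then show ?thesis by auto
qed

lemma uf_un: "l \<in> L \<Longrightarrow> d l = m + n \<Longrightarrow>
   f \<in> L \<Longrightarrow> g \<in> L \<Longrightarrow> s f = r g \<Longrightarrow> l = cmp f g \<Longrightarrow> d f = m \<Longrightarrow> d g = n \<Longrightarrow>
   f' \<in> L \<Longrightarrow> g' \<in> L \<Longrightarrow> s f' = r g' \<Longrightarrow> l = cmp f' g' \<Longrightarrow> d f' = m \<Longrightarrow> d g' = n \<Longrightarrow>
   f = f' \<and> g = g'"
proof -
  assume a: "l \<in> L" "d l = m + n"
   and b: "f \<in> L" "g \<in> L" "s f = r g" "l = cmp f g" "d f = m" "d g = n"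
   and c: "f' \<in> L" "g' \<in> L" "s f' = r g'" "l = cmp f' g'" "d f' = m" "d g' = n"
  have "\<exists>!(f, g). f \<in> L \<and> g \<in> L \<and> s f = r g \<and> l = cmp f g \<and> d f = m \<and> d g = n"
    using KG a unfolding kgraph_def by blast
  then obtain p where "\<And>q. (case q of (f, g) \<Rightarrow> f \<in> L \<and> g \<in> L \<and> s f = r g \<and> l = cmp f g \<and> d f = m \<and> d g = n) \<Longrightarrow> q = p"
    by (metis (no_types, lifting) Ex1_def)
  then have "(f, g) = p" "(f', g') = p" using b c by auto
  then have "(f, g) = (f', g')" by simp
  then show ?thesis by simp
qed

lemma deg0: "l \<in> L \<Longrightarrow> d l = 0 \<Longrightarrow> l = idm (r l)"
proof -
  assume a: "l \<in> L" "d l = 0"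
  have "idm (r l) = l \<and> l = idm (s l)"
    apply (rule uf_un[of l 0 0])
    using a by (auto simp: idL rV sV r_id s_id id_l id_r d_id)
  then show ?thesis by simp
qed

lemma fadd_diff: "(q::'k\<Rightarrow>nat) \<le> D \<Longrightarrow> q + (D - q) = D"
  by (rule ext) (simp add: le_fun_def)

lemma fdiff_add: "(p::'k\<Rightarrow>nat) \<le> q \<Longrightarrow> q \<le> t \<Longrightarrow> (q - p) + (t - q) = t - p"
proof (rule ext)
  fix x assume "p \<le> q" "q \<le> t"
  then have "p x \<le> q x" "q x \<le> t x" by (auto simp: le_fun_def)
  then show "(q - p + (t - q)) x = (t - p) x" by simp
qed

lemma seg_char:
  assumes "mu \<in> L" "nu \<in> L" "rho \<in> L" "s mu = r nu" "s nu = r rho"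
    "w = cmp (cmp mu nu) rho" "d mu = p" "d nu = q - p" "p \<le> q"
  shows "seg L r s cmp d w p q = nu"
  unfolding seg_def
proof (rule the_equality)
  show "\<exists>mu rho. mu \<in> L \<and> nu \<in> L \<and> rho \<in> L \<and> s mu = r nu \<and> s nu = r rho \<and>
      w = cmp (cmp mu nu) rho \<and> d mu = p \<and> d nu = q - p" using assms by blast
next
  fix nu' assume "\<exists>mu' rho'. mu' \<in> L \<and> nu' \<in> L \<and> rho' \<in> L \<and> s mu' = r nu' \<and> s nu' = r rho' \<and>
      w = cmp (cmp mu' nu') rho' \<and> d mu' = p \<and> d nu' = q - p"
  then obtain mu' rho' where b: "mu' \<in> L" "nu' \<in> L" "rho' \<in> L" "s mu' = r nu'" "s nu' = r rho'"
      "w = cmp (cmp mu' nu') rho'" "d mu' = p" "d nu' = q - p" by blast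
  have nr: "cmp nu rho \<in> L" "r (cmp nu rho) = r nu" "d (cmp nu rho) = (q - p) + d rho"
    using assms by (auto simp: cmpL r_cmp d_cmp)
  have nr': "cmp nu' rho' \<in> L" "r (cmp nu' rho') = r nu'" "d (cmp nu' rho') = (q - p) + d rho'"
    using b by (auto simp: cmpL r_cmp d_cmp)
  have w1: "w = cmp mu (cmp nu rho)" using assms by (simp add: assoc)
  have w2: "w = cmp mu' (cmp nu' rho')" using b by (simp add: assoc)
  have wL: "w \<in> L" using w1 assms nr by (simp add: cmpL)
  have dw1: "d w = p + ((q - p) + d rho)" using w1 assms nr by (simp add: d_cmp)
  have dw2: "d w = p + ((q - p) + d rho')" using w2 b nr' by (simp add: d_cmp)
  have "d rho = d rho'" using dw1 dw2 by simp
  have "mu = mu' \<and> cmp nu rho = cmp nu' rho'"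
    by (rule uf_un[OF wL dw1, of mu "cmp nu rho" mu' "cmp nu' rho'"])
       (use assms b nr nr' w1 w2 \<open>d rho = d rho'\<close> in auto)
  then have "nu = nu' \<and> rho = rho'"
    by (intro uf_un[OF nr(1) nr(3), of nu rho nu' rho']) (use assms b \<open>d rho = d rho'\<close> in auto)
  then show "nu' = nu" by simp
qed

lemma seg_ex:
  assumes "w \<in> L" "p \<le> q" "q \<le> d w"
  shows "\<exists>mu nu rho. mu \<in> L \<and> nu \<in> L \<and> rho \<in> L \<and> s mu = r nu \<and> s nu = r rho \<and>
      w = cmp (cmp mu nu) rho \<and> d mu = p \<and> d nu = q - p"
proof -
  obtain a rho where a: "a \<in> L" "rho \<in> L" "s a = r rho" "w = cmp a rho" "d a = q" "d rho = d w - q"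
    using uf_ex[OF assms(1), of q "d w - q"] assms fadd_diff by metis
  obtain mu nu where m: "mu \<in> L" "nu \<in> L" "s mu = r nu" "a = cmp mu nu" "d mu = p" "d nu = q - p"
    using uf_ex[OF a(1), of p "q - p"] assms fadd_diff a by metis
  have "s nu = r rho" using a m by (metis s_cmp)
  then show ?thesis using a m by blast
qed

abbreviation "fac \<equiv> seg L r s cmp d"

lemma fac_L:
  assumes "w \<in> L" "p \<le> q" "q \<le> d w"
  shows "fac w p q \<in> L \<and> d (fac w p q) = q - p"
  using seg_ex[OF assms] seg_char assms by metis

lemma fac_comp:
  assumes "w \<in> L" "p \<le> q" "q \<le> t" "t \<le> d w"
  shows "s (fac w p q) = r (fac w q t) \<and> cmp (fac w p q) (fac w q t) = fac w p t"
proof -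
  have pt: "p \<le> t" using assms order_trans by blast
  obtain mu N rho where D: "mu \<in> L" "N \<in> L" "rho \<in> L" "s mu = r N" "s N = r rho"
      "w = cmp (cmp mu N) rho" "d mu = p" "d N = t - p"
    using seg_ex[OF assms(1) pt assms(4)] by blast
  have "(q - p) + (t - q) = t - p" using assms(2,3) by (rule fdiff_add)
  then obtain a b where ab: "a \<in> L" "b \<in> L" "s a = r b" "N = cmp a b" "d a = q - p" "d b = t - q"
    using uf_ex[OF D(2), of "q - p" "t - q"] D by metis
  have fpt: "fac w p t = N" using seg_char D pt by blast
  have ra: "r a = r N" "s b = s N" using ab(1-4) r_cmp s_cmp by metis+
  have ma: "cmp mu a \<in> L" "s (cmp mu a) = r b" "d (cmp mu a) = q"
    using cmpL[OF D(1) ab(1)] s_cmp[OF D(1) ab(1)] d_cmp[OF D(1) ab(1)] D(4,7) ab(3,5) ra(1)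
      fadd_diff[OF assms(2)] by auto
  have br: "cmp b rho \<in> L" "r (cmp b rho) = r b"
    using cmpL[OF ab(2) D(3)] r_cmp[OF ab(2) D(3)] ra(2) D(5) by auto
  have e1: "cmp mu N = cmp (cmp mu a) b"
    using D(4) ab(4) ra(1) assoc[OF D(1) ab(1) ab(2)] ab(3) by simp
  have w2: "w = cmp (cmp (cmp mu a) b) rho" using D(6) e1 by simp
  have w1: "w = cmp (cmp mu a) (cmp b rho)"
    using w2 assoc[OF ma(1) ab(2) D(3) ma(2)] ra(2) D(5) by simp
  have fpq: "fac w p q = a"
    by (rule seg_char[OF D(1) ab(1) br(1) _ _ w1 D(7) ab(5) assms(2)])
       (use D(4) ra(1) ab(3) br(2) in auto)
  have fqt: "fac w q t = b"
    by (rule seg_char[OF ma(1) ab(2) D(3) ma(2) _ w2 ma(3) ab(6) assms(3)])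
       (use D(5) ra(2) in auto)
  show ?thesis using fpq fqt fpt ab by simp
qed

lemma fac_all: "w \<in> L \<Longrightarrow> fac w 0 (d w) = w"
  by (rule seg_char[of "idm (r w)" w "idm (s w)"])
     (auto simp: idL rV sV r_id s_id id_l id_r d_id)

lemma fac_end: "w \<in> L \<Longrightarrow> fac w (d w) (d w) = idm (s w)"
  by (rule seg_char[of w "idm (s w)" "idm (s w)"])
     (auto simp: idL rV sV r_id s_id id_l id_r d_id)

lemma fac_r:
  assumes "w \<in> L" "p \<le> q" "q \<le> d w"
  shows "r (fac w p q) = r (fac w p p)" "s (fac w p q) = r (fac w q q)"
proof -
  have pw: "p \<le> d w" using assms order_trans by blast
  show "r (fac w p q) = r (fac w p p)"
    using fac_comp[OF assms(1) order_refl assms(2,3)] fac_L[OF assms(1) order_refl pw]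
      fac_L[OF assms] by (metis r_cmp)
  show "s (fac w p q) = r (fac w q q)"
    using fac_comp[OF assms(1,2) order_refl assms(3)] by simp
qed

lemma fac_id:
  assumes "w \<in> L" "p \<le> d w"
  shows "fac w p p = idm (r (fac w p p))"
  using fac_L[OF assms(1) order_refl assms(2)] deg0 by simp

lemma fac_left:
  assumes "u \<in> L" "v \<in> L" "s u = r v" "p \<le> q" "q \<le> d u"
  shows "fac (cmp u v) p q = fac u p q"
proof -
  obtain mu nu rho where D: "mu \<in> L" "nu \<in> L" "rho \<in> L" "s mu = r nu" "s nu = r rho"
      "u = cmp (cmp mu nu) rho" "d mu = p" "d nu = q - p"
    using seg_ex[OF assms(1,4,5)] by blast
  have fu: "fac u p q = nu" using seg_char[OF D assms(4)] .
  have mn: "cmp mu nu \<in> L" "s (cmp mu nu) = r rho"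
    using cmpL[OF D(1,2,4)] s_cmp[OF D(1,2,4)] D(5) by auto
  have sr: "s rho = s u" using D(6) s_cmp[OF mn(1) D(3) mn(2)] by simp
  have rv: "cmp rho v \<in> L" "r (cmp rho v) = r rho"
    using cmpL[OF D(3) assms(2)] r_cmp[OF D(3) assms(2)] sr assms(3) by auto
  have "cmp u v = cmp (cmp mu nu) (cmp rho v)"
    using D(6) assoc[OF mn(1) D(3) assms(2) mn(2)] sr assms(3) by simp
  then have "fac (cmp u v) p q = nu"
    using seg_char[OF D(1,2) rv(1) D(4)] D(5,7,8) rv(2) assms(4) by simp
  then show ?thesis using fu by simp
qed

lemma fac_right:
  assumes "u \<in> L" "v \<in> L" "s u = r v" "d u \<le> p" "p \<le> q" "q \<le> d u + d v"
  shows "fac (cmp u v) p q = fac v (p - d u) (q - d u)"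
proof -
  have a1: "p - d u \<le> q - d u" using assms(5) by (auto simp: le_fun_def intro!: diff_le_mono)
  have a2: "q - d u \<le> d v" using assms(6) by (simp add: le_fun_def) (metis add.commute le_diff_conv)
  obtain mu nu rho where D: "mu \<in> L" "nu \<in> L" "rho \<in> L" "s mu = r nu" "s nu = r rho"
      "v = cmp (cmp mu nu) rho" "d mu = p - d u" "d nu = (q - d u) - (p - d u)"
    using seg_ex[OF assms(2) a1 a2] by blast
  have fv: "fac v (p - d u) (q - d u) = nu" using seg_char[OF D a1] .
  have mn: "cmp mu nu \<in> L" "s (cmp mu nu) = r rho" "r (cmp mu nu) = r mu"
    using cmpL[OF D(1,2,4)] s_cmp[OF D(1,2,4)] r_cmp[OF D(1,2,4)] D(5) by auto
  have rm: "r mu = r v" using D(6) r_cmp[OF mn(1) D(3) mn(2)] mn(3) by simp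
  have dd: "d u + (p - d u) = p" using fadd_diff[OF assms(4)] .
  have um: "cmp u mu \<in> L" "s (cmp u mu) = r nu" "d (cmp u mu) = p"
    using cmpL[OF assms(1) D(1)] s_cmp[OF assms(1) D(1)] d_cmp[OF assms(1) D(1)] rm assms(3) D(4,7) dd
    by auto
  have e1: "cmp u v = cmp u (cmp (cmp mu nu) rho)" using D(6) by simp
  also have "\<dots> = cmp (cmp u (cmp mu nu)) rho"
    using assoc[OF assms(1) mn(1) D(3)] mn rm assms(3) by simp
  also have "cmp u (cmp mu nu) = cmp (cmp u mu) nu"
    using assoc[OF assms(1) D(1,2)] rm assms(3) D(4) by simp
  finally have e2: "cmp u v = cmp (cmp (cmp u mu) nu) rho" .
  have "d nu = q - p"
  proof -
    have "(q - d u) - (p - d u) = q - p" using assms(4,5)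
      by (intro ext) (auto simp: le_fun_def)
    then show ?thesis using D(8) by simp
  qed
  then have "fac (cmp u v) p q = nu"
    using seg_char[OF um(1) D(2,3) um(2) D(5) e2 um(3) _ assms(5)] by simp
  then show ?thesis using fv by simp
qed

lemma fac_mid:
  assumes "u \<in> L" "v \<in> L" "s u = r v" "a \<le> d u" "d u \<le> b" "b \<le> d u + d v"
  shows "fac (cmp u v) a b = cmp (fac u a (d u)) (fac v 0 (b - d u))"
proof -
  have wL: "cmp u v \<in> L" and dw: "d (cmp u v) = d u + d v" using assms by (auto simp: cmpL d_cmp)
  have "fac (cmp u v) a b = cmp (fac (cmp u v) a (d u)) (fac (cmp u v) (d u) b)"
    using fac_comp[OF wL assms(4,5)] assms dw by simp
  also have "fac (cmp u v) a (d u) = fac u a (d u)" using fac_left assms by blast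
  also have "fac (cmp u v) (d u) b = fac v (d u - d u) (b - d u)"
    using fac_right assms by blast
  finally show ?thesis by simp
qed

lemma leq_en_mono: "p \<le> q \<Longrightarrow> leq_en q D \<Longrightarrow> leq_en p D"
  unfolding leq_en_def le_fun_def by (meson enat_ord_simps(1) order_trans)

lemma leq_en_0: "leq_en 0 D"
  unfolding leq_en_def by (metis zero_enat_def zero_le zero_fun_def)

lemma en1: "enat p \<le> D \<Longrightarrow> (enat b \<le> D - enat p) = (enat (b + p) \<le> D)"
  by (cases D) auto
lemma en2: "(enat b \<le> enat e + D) = (enat (b - e) \<le> D)"
  by (cases D) auto

lemma leq_en_shift_iff:
  assumes "leq_en p D"
  shows "leq_en b (\<lambda>i. D i - enat (p i)) \<longleftrightarrow> leq_en (b + p) D"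
  using assms unfolding leq_en_def by (simp add: en1)

lemma leq_en_plus_iff:
  "leq_en b (\<lambda>i. enat (e i) + D i) \<longleftrightarrow> leq_en (b - e) D"
  unfolding leq_en_def by (simp add: en2)

lemma sup_minus: "sup (b::'k \<Rightarrow> nat) e - e = b - e"
  by (rule ext) (simp add: sup_nat_def max_def)

lemma fdiff_self: "(b::'k\<Rightarrow>nat) - b = 0" by (rule ext) simp

lemma fle_add_left: "(e::'k\<Rightarrow>nat) \<le> e + c" by (simp add: le_fun_def)

section \<open>Graph morphisms\<close>

abbreviation "GM \<equiv> graph_morphism V L r s idm cmp d"
abbreviation "BPs \<equiv> boundary_paths V L r s idm cmp d"

lemma gm_parts:
  assumes "GM x"
  shows "\<forall>p q. \<not> in_Omega (fst x) p q \<longrightarrow> snd x p q = undefined"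
    "\<forall>p q. in_Omega (fst x) p q \<longrightarrow>
        snd x p q \<in> L \<and> d (snd x p q) = q - p \<and>
        r (snd x p q) = r (snd x p p) \<and> s (snd x p q) = r (snd x q q)"
    "\<forall>p. leq_en p (fst x) \<longrightarrow> snd x p p = idm (r (snd x p p))"
    "\<forall>p q t. p \<le> q \<and> in_Omega (fst x) q t \<longrightarrow> cmp (snd x p q) (snd x q t) = snd x p t"
  using assms unfolding graph_morphism_def apply -
  subgoal by (elim conjE) assumption
  subgoal by (elim conjE) assumption
  subgoal by (elim conjE) assumption
  subgoal by (elim conjE) assumption
  done

lemma gm_L:
  assumes "GM x" "in_Omega (fst x) p q"
  shows "snd x p q \<in> L" "d (snd x p q) = q - p" "r (snd x p q) = r (snd x p p)"
    "s (snd x p q) = r (snd x q q)"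
  using gm_parts(2)[OF assms(1)] assms(2) by auto

lemma gm_id: "GM x \<Longrightarrow> leq_en p (fst x) \<Longrightarrow> snd x p p = idm (r (snd x p p))"
  using gm_parts(3) by blast

lemma gm_cmp: "GM x \<Longrightarrow> p \<le> q \<Longrightarrow> in_Omega (fst x) q t \<Longrightarrow> cmp (snd x p q) (snd x q t) = snd x p t"
  using gm_parts(4) by blast

lemma gm_undef: "GM x \<Longrightarrow> \<not> in_Omega (fst x) p q \<Longrightarrow> snd x p q = undefined"
  using gm_parts(1) by blast

lemma inO_I: "p \<le> q \<Longrightarrow> leq_en q D \<Longrightarrow> in_Omega D p q"
  by (simp add: in_Omega_def)

lemma gm_fac:
  assumes "GM x" "a \<le> b" "b \<le> t" "leq_en t (fst x)"
  shows "fac (snd x 0 t) a b = snd x a b"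
proof -
  have lb: "leq_en b (fst x)" using leq_en_mono assms by blast
  have la: "leq_en a (fst x)" using leq_en_mono assms lb by blast
  have o1: "in_Omega (fst x) 0 a" "in_Omega (fst x) a b" "in_Omega (fst x) b t"
    using assms la lb by (auto simp: in_Omega_def)
  have o2: "in_Omega (fst x) 0 b" using assms lb by (auto simp: in_Omega_def)
  have L1: "snd x 0 a \<in> L" "snd x a b \<in> L" "snd x b t \<in> L"
    using gm_L(1)[OF assms(1)] o1 by auto
  have e: "snd x 0 t = cmp (cmp (snd x 0 a) (snd x a b)) (snd x b t)"
    using gm_cmp[OF assms(1) _ o1(2)] gm_cmp[OF assms(1) _ o1(3)] by simp
  have s1: "s (snd x 0 a) = r (snd x a b)" using gm_L(4)[OF assms(1) o1(1)] gm_L(3)[OF assms(1) o1(2)] by simp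
  have s2: "s (snd x a b) = r (snd x b t)" using gm_L(4)[OF assms(1) o1(2)] gm_L(3)[OF assms(1) o1(3)] by simp
  have d1: "d (snd x 0 a) = a" using gm_L(2)[OF assms(1) o1(1)] by simp
  show ?thesis
    by (rule seg_char[OF L1 s1 s2 e d1 gm_L(2)[OF assms(1) o1(2)] assms(2)])
qed

section \<open>shift\<close>

lemma shift_fst: "fst (shift p x) = (\<lambda>i. fst x i - enat (p i))"
  by (simp add: shift_def Let_def)

lemma shift_snd: "snd (shift p x) a b =
   (if in_Omega (\<lambda>i. fst x i - enat (p i)) a b then snd x (a + p) (b + p) else undefined)"
  by (simp add: shift_def Let_def)

lemma fadd_le_cancel: "((a::'k\<Rightarrow>nat) + p \<le> b + p) = (a \<le> b)"
  by (simp add: le_fun_def)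

lemma inO_shift: "leq_en p D \<Longrightarrow>
   in_Omega (\<lambda>i. D i - enat (p i)) a b \<longleftrightarrow> in_Omega D (a + p) (b + p)"
  unfolding in_Omega_def by (simp add: leq_en_shift_iff fadd_le_cancel)

lemma fdiff_cancel: "((b::'k\<Rightarrow>nat) + p) - (a + p) = b - a"
  by (rule ext) simp

lemma shift_GM:
  assumes gx: "GM x" and lp: "leq_en p (fst x)"
  shows "GM (shift p x)"
proof -
  let ?D = "\<lambda>i. fst x i - enat (p i)"
  have F: "fst (shift p x) = ?D" by (rule shift_fst)
  have S: "\<And>a b. in_Omega ?D a b \<Longrightarrow> snd (shift p x) a b = snd x (a + p) (b + p)"
    by (simp add: shift_snd)
  have O: "\<And>a b. in_Omega ?D a b \<longleftrightarrow> in_Omega (fst x) (a + p) (b + p)"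
    using inO_shift[OF lp] .
  have Oaa: "\<And>a b. in_Omega ?D a b \<Longrightarrow> in_Omega ?D a a \<and> in_Omega ?D b b"
    unfolding in_Omega_def by (meson leq_en_mono order_refl)
  show ?thesis
    unfolding graph_morphism_def F
  proof (intro conjI allI impI)
    fix a b assume "\<not> in_Omega ?D a b"
    then show "snd (shift p x) a b = undefined" by (simp add: shift_snd)
  next
    fix a b assume h: "in_Omega ?D a b"
    have h': "in_Omega (fst x) (a + p) (b + p)" using h O by blast
    have ha: "in_Omega ?D a a" "in_Omega ?D b b" using Oaa[OF h] by blast+
    note Sab = S[OF h] and Saa = S[OF ha(1)] and Sbb = S[OF ha(2)]
    show "snd (shift p x) a b \<in> L" unfolding Sab by (rule gm_L(1)[OF gx h'])
    show "d (snd (shift p x) a b) = b - a" unfolding Sab gm_L(2)[OF gx h'] by (rule fdiff_cancel)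
    show "r (snd (shift p x) a b) = r (snd (shift p x) a a)"
      unfolding Sab Saa by (rule gm_L(3)[OF gx h'])
    show "s (snd (shift p x) a b) = r (snd (shift p x) b b)"
      unfolding Sab Sbb by (rule gm_L(4)[OF gx h'])
  next
    fix a assume h: "leq_en a ?D"
    have h1: "in_Omega ?D a a" using h by (simp add: in_Omega_def)
    have h2: "leq_en (a + p) (fst x)" using h leq_en_shift_iff[OF lp] by blast
    show "snd (shift p x) a a = idm (r (snd (shift p x) a a))"
      unfolding S[OF h1] by (rule gm_id[OF gx h2])
  next
    fix a b t assume h: "a \<le> b \<and> in_Omega ?D b t"
    have h1: "in_Omega ?D a b" "in_Omega ?D a t"
      using h unfolding in_Omega_def by (meson leq_en_mono order_trans)+
    have h2: "a + p \<le> b + p" "in_Omega (fst x) (b + p) (t + p)"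
      using h O fadd_le_cancel by blast+
    show "cmp (snd (shift p x) a b) (snd (shift p x) b t) = snd (shift p x) a t"
      unfolding S[OF h1(1)] S[OF h1(2)] S[OF conjunct2[OF h]] by (rule gm_cmp[OF gx h2])
  qed
qed

lemma en3: "enat p \<le> D \<Longrightarrow> enat q = D - enat p \<Longrightarrow> enat (q + p) = D"
  by (cases D) auto

lemma en4: "enat n \<le> D \<Longrightarrow> enat p \<le> D \<Longrightarrow> enat (n - p) \<le> D - enat p"
  by (cases D) auto

lemma bp_GM: "x \<in> BPs \<Longrightarrow> GM x" by (simp add: boundary_paths_def)

lemma bp_bd: "x \<in> BPs \<Longrightarrow> \<exists>nx. leq_en nx (fst x) \<and>
            (\<forall>p i. nx \<le> p \<and> leq_en p (fst x) \<and> enat (p i) = fst x i \<longrightarrow>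
               \<not> (\<exists>l\<in>L. r l = gvert r x p \<and> d l = ebasis i))"
  by (simp add: boundary_paths_def)

lemma bp_I: "GM x \<Longrightarrow> leq_en nx (fst x) \<Longrightarrow>
   (\<And>p i. nx \<le> p \<Longrightarrow> leq_en p (fst x) \<Longrightarrow> enat (p i) = fst x i \<Longrightarrow>
       \<not> (\<exists>l\<in>L. r l = gvert r x p \<and> d l = ebasis i)) \<Longrightarrow> x \<in> BPs"
  unfolding boundary_paths_def by blast

lemma shift_BP:
  assumes bx: "x \<in> BPs" and lp: "leq_en p (fst x)"
  shows "shift p x \<in> BPs"
proof -
  let ?D = "\<lambda>i. fst x i - enat (p i)"
  have gx: "GM x" using bx bp_GM by blast
  obtain nx where nx: "leq_en nx (fst x)" "\<forall>q i. nx \<le> q \<and> leq_en q (fst x) \<and> enat (q i) = fst x i \<longrightarrow>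
               \<not> (\<exists>l\<in>L. r l = gvert r x q \<and> d l = ebasis i)" using bp_bd[OF bx] by blast
  show ?thesis
  proof (rule bp_I[OF shift_GM[OF gx lp], of "nx - p"])
    show "leq_en (nx - p) (fst (shift p x))"
      unfolding shift_fst leq_en_def
    proof
      fix i
      have "enat (nx i) \<le> fst x i" "enat (p i) \<le> fst x i" using nx(1) lp unfolding leq_en_def by blast+
      then show "enat ((nx - p) i) \<le> fst x i - enat (p i)" using en4 by simp
    qed
  next
    fix q i assume h: "nx - p \<le> q" "leq_en q (fst (shift p x))" "enat (q i) = fst (shift p x) i"
    have q1: "nx \<le> q + p" using h(1) by (simp add: le_fun_def le_diff_conv)
    have q2: "leq_en (q + p) (fst x)" using h(2) unfolding shift_fst leq_en_shift_iff[OF lp] .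
    have q3: "enat ((q + p) i) = fst x i"
    proof -
      have "enat (p i) \<le> fst x i" using lp unfolding leq_en_def by blast
      moreover have "enat (q i) = fst x i - enat (p i)" using h(3) by (simp add: shift_fst)
      ultimately show ?thesis using en3 by simp
    qed
    have io: "in_Omega ?D q q" using h(2) unfolding shift_fst in_Omega_def by simp
    have gv: "gvert r (shift p x) q = gvert r x (q + p)"
      unfolding gvert_def shift_snd using io by simp
    have "\<not> (\<exists>l\<in>L. r l = gvert r x (q + p) \<and> d l = ebasis i)"
      using nx(2) q1 q2 q3 by blast
    then show "\<not> (\<exists>l\<in>L. r l = gvert r (shift p x) q \<and> d l = ebasis i)"
      by (simp add: gv)
  qed
qed

section \<open>prepend\<close>

abbreviation "prep \<equiv> prepend L r s cmp d"

lemma prep_fst: "fst (prep l y) = (\<lambda>i. enat (d l i) + fst y i)"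
  by (simp add: prepend_def Let_def)

lemma prep_snd: "snd (prep l y) a b = (if in_Omega (\<lambda>i. enat (d l i) + fst y i) a b
     then fac (cmp l (snd y 0 (b - d l))) a b else undefined)"
  by (simp add: prepend_def Let_def sup_minus)

lemma fzero_le: "(0::'k\<Rightarrow>nat) \<le> a" by (simp add: le_fun_def)

lemma fle_add_diff: "(b::'k\<Rightarrow>nat) \<le> e + (b - e)" by (auto simp: le_fun_def)

lemma fdiff_mono: "(b::'k\<Rightarrow>nat) \<le> t \<Longrightarrow> b - e \<le> t - e"
  by (auto simp: le_fun_def intro!: diff_le_mono)

lemma W_props:
  assumes lL: "l \<in> L" and gy: "GM y" and sl: "s l = r (snd y 0 0)"
    and lb: "leq_en b (\<lambda>i. enat (d l i) + fst y i)"
  shows "cmp l (snd y 0 (b - d l)) \<in> L" "d (cmp l (snd y 0 (b - d l))) = d l + (b - d l)"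
    "s (cmp l (snd y 0 (b - d l))) = r (snd y (b - d l) (b - d l))"
    "s l = r (snd y 0 (b - d l))"
    "in_Omega (fst y) 0 (b - d l)"
proof -
  have io: "in_Omega (fst y) 0 (b - d l)"
    using lb by (simp add: in_Omega_def fzero_le leq_en_plus_iff)
  have sl': "s l = r (snd y 0 (b - d l))" using gm_L(3)[OF gy io] sl by simp
  show "cmp l (snd y 0 (b - d l)) \<in> L" using cmpL[OF lL gm_L(1)[OF gy io] sl'] .
  show "d (cmp l (snd y 0 (b - d l))) = d l + (b - d l)"
    using d_cmp[OF lL gm_L(1)[OF gy io] sl'] gm_L(2)[OF gy io] by simp
  show "s (cmp l (snd y 0 (b - d l))) = r (snd y (b - d l) (b - d l))"
    using s_cmp[OF lL gm_L(1)[OF gy io] sl'] gm_L(4)[OF gy io] by simp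
  show "s l = r (snd y 0 (b - d l))" by (rule sl')
  show "in_Omega (fst y) 0 (b - d l)" by (rule io)
qed

lemma W_ext:
  assumes lL: "l \<in> L" and gy: "GM y" and sl: "s l = r (snd y 0 0)"
    and bt: "b \<le> t" and lt: "leq_en t (\<lambda>i. enat (d l i) + fst y i)"
  shows "cmp l (snd y 0 (t - d l)) = cmp (cmp l (snd y 0 (b - d l))) (snd y (b - d l) (t - d l))"
    "snd y (b - d l) (t - d l) \<in> L"
    "s (cmp l (snd y 0 (b - d l))) = r (snd y (b - d l) (t - d l))"
proof -
  have lb: "leq_en b (\<lambda>i. enat (d l i) + fst y i)" using leq_en_mono[OF bt lt] .
  have io2: "in_Omega (fst y) (b - d l) (t - d l)"
    using lt fdiff_mono[OF bt] by (simp add: in_Omega_def leq_en_plus_iff)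
  have io1: "in_Omega (fst y) 0 (b - d l)" using W_props(5)[OF lL gy sl lb] .
  have e: "snd y 0 (t - d l) = cmp (snd y 0 (b - d l)) (snd y (b - d l) (t - d l))"
    using gm_cmp[OF gy fzero_le io2] by simp
  have s1: "s (snd y 0 (b - d l)) = r (snd y (b - d l) (t - d l))"
    using gm_L(4)[OF gy io1] gm_L(3)[OF gy io2] by simp
  show "cmp l (snd y 0 (t - d l)) = cmp (cmp l (snd y 0 (b - d l))) (snd y (b - d l) (t - d l))"
    unfolding e using assoc[OF lL gm_L(1)[OF gy io1] gm_L(1)[OF gy io2] W_props(4)[OF lL gy sl lb] s1]
    by simp
  show "snd y (b - d l) (t - d l) \<in> L" using gm_L(1)[OF gy io2] .
  show "s (cmp l (snd y 0 (b - d l))) = r (snd y (b - d l) (t - d l))"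
    using W_props(3)[OF lL gy sl lb] gm_L(3)[OF gy io2] by simp
qed

lemma W_fac:
  assumes lL: "l \<in> L" and gy: "GM y" and sl: "s l = r (snd y 0 0)"
    and ab: "a \<le> b" and bt: "b \<le> t" and lt: "leq_en t (\<lambda>i. enat (d l i) + fst y i)"
  shows "fac (cmp l (snd y 0 (t - d l))) a b = fac (cmp l (snd y 0 (b - d l))) a b"
proof -
  have lb: "leq_en b (\<lambda>i. enat (d l i) + fst y i)" using leq_en_mono[OF bt lt] .
  show ?thesis
    unfolding W_ext(1)[OF lL gy sl bt lt]
    by (rule fac_left[OF W_props(1)[OF lL gy sl lb] W_ext(2,3)[OF lL gy sl bt lt] ab])
       (simp add: W_props(2)[OF lL gy sl lb] fle_add_diff)
qed

lemma prep_GM: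
  assumes lL: "l \<in> L" and gy: "GM y" and sl: "s l = r (snd y 0 0)"
  shows "GM (prep l y)"
proof -
  let ?D = "\<lambda>i. enat (d l i) + fst y i"
  let ?W = "\<lambda>b. cmp l (snd y 0 (b - d l))"
  have F: "fst (prep l y) = ?D" by (rule prep_fst)
  have S: "\<And>a b. in_Omega ?D a b \<Longrightarrow> snd (prep l y) a b = fac (?W b) a b"
    by (simp add: prep_snd)
  have WL: "\<And>b. leq_en b ?D \<Longrightarrow> ?W b \<in> L \<and> b \<le> d (?W b)"
    using W_props(1,2)[OF lL gy sl] fle_add_diff by simp
  have WF: "\<And>a b t. a \<le> b \<Longrightarrow> b \<le> t \<Longrightarrow> leq_en t ?D \<Longrightarrow> fac (?W t) a b = fac (?W b) a b"
    using W_fac[OF lL gy sl] by blast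
  show ?thesis
    unfolding graph_morphism_def F
  proof (intro conjI allI impI)
    fix a b assume "\<not> in_Omega ?D a b"
    then show "snd (prep l y) a b = undefined" by (simp add: prep_snd)
  next
    fix a b assume h: "in_Omega ?D a b"
    have ab: "a \<le> b" and lb: "leq_en b ?D" using h by (auto simp: in_Omega_def)
    have la: "leq_en a ?D" using leq_en_mono[OF ab lb] .
    have ha: "in_Omega ?D a a" "in_Omega ?D b b" using la lb by (auto simp: in_Omega_def)
    note W = WL[OF lb]
    have bW: "b \<le> d (?W b)" using W by blast
    have aW: "a \<le> d (?W b)" using ab bW order_trans by blast
    show "snd (prep l y) a b \<in> L" unfolding S[OF h] using fac_L[OF conjunct1[OF W] ab bW] by blast
    show "d (snd (prep l y) a b) = b - a" unfolding S[OF h] using fac_L[OF conjunct1[OF W] ab bW] by blast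
    show "r (snd (prep l y) a b) = r (snd (prep l y) a a)"
      unfolding S[OF h] S[OF ha(1)] fac_r(1)[OF conjunct1[OF W] ab bW]
      using WF[OF order_refl ab lb] by simp
    show "s (snd (prep l y) a b) = r (snd (prep l y) b b)"
      unfolding S[OF h] S[OF ha(2)] by (rule fac_r(2)[OF conjunct1[OF W] ab bW])
  next
    fix a assume h: "leq_en a ?D"
    have h1: "in_Omega ?D a a" using h by (simp add: in_Omega_def)
    note W = WL[OF h]
    show "snd (prep l y) a a = idm (r (snd (prep l y) a a))"
      unfolding S[OF h1] by (rule fac_id) (use W in auto)
  next
    fix a b t assume h: "a \<le> b \<and> in_Omega ?D b t"
    have ab: "a \<le> b" and bt: "b \<le> t" and lt: "leq_en t ?D" using h by (auto simp: in_Omega_def)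
    have at: "a \<le> t" using ab bt order_trans by blast
    have h1: "in_Omega ?D a b" "in_Omega ?D a t" "in_Omega ?D b t"
      using ab bt at lt leq_en_mono[OF bt lt] by (auto simp: in_Omega_def)
    note W = WL[OF lt]
    show "cmp (snd (prep l y) a b) (snd (prep l y) b t) = snd (prep l y) a t"
      unfolding S[OF h1(1)] S[OF h1(2)] S[OF h1(3)] WF[OF ab bt lt, symmetric]
      using fac_comp[OF conjunct1[OF W] ab bt conjunct2[OF W]] by blast
  qed
qed

lemma prep_val:
  assumes lL: "l \<in> L" and gy: "GM y" and sl: "s l = r (snd y 0 0)"
    and a: "a \<le> d l" and b: "d l \<le> b" and lb: "leq_en b (fst (prep l y))"
  shows "snd (prep l y) a b = cmp (fac l a (d l)) (snd y 0 (b - d l))"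
proof -
  let ?D = "\<lambda>i. enat (d l i) + fst y i"
  have lb': "leq_en b ?D" using lb prep_fst by metis
  have ab: "a \<le> b" using a b order_trans by blast
  have io: "in_Omega ?D a b" using ab lb' by (simp add: in_Omega_def)
  have S: "snd (prep l y) a b = fac (cmp l (snd y 0 (b - d l))) a b"
    using io by (simp add: prep_snd)
  have io2: "in_Omega (fst y) 0 (b - d l)" using W_props(5)[OF lL gy sl lb'] .
  have vL: "snd y 0 (b - d l) \<in> L" and dv: "d (snd y 0 (b - d l)) = b - d l"
    using gm_L[OF gy io2] by auto
  have bb: "b \<le> d l + d (snd y 0 (b - d l))" using dv fle_add_diff by simp
  have e1: "fac (cmp l (snd y 0 (b - d l))) a b
      = cmp (fac l a (d l)) (fac (snd y 0 (b - d l)) 0 (b - d l))"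
    using fac_mid[OF lL vL W_props(4)[OF lL gy sl lb'] a b bb] .
  have e2: "fac (snd y 0 (b - d l)) 0 (b - d l) = snd y 0 (b - d l)"
    using fac_all[OF vL] unfolding dv .
  show ?thesis unfolding S e1 e2 ..
qed

lemma prep_vert:
  assumes lL: "l \<in> L" and gy: "GM y" and sl: "s l = r (snd y 0 0)"
    and b: "d l \<le> p" and lp: "leq_en p (fst (prep l y))"
  shows "gvert r (prep l y) p = gvert r y (p - d l)"
proof -
  let ?D = "\<lambda>i. enat (d l i) + fst y i"
  let ?W = "cmp l (snd y 0 (p - d l))"
  have lp': "leq_en p ?D" using lp prep_fst by metis
  have io: "in_Omega ?D p p" using lp' by (simp add: in_Omega_def)
  have S: "snd (prep l y) p p = fac ?W p p" using io by (simp add: prep_snd)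
  have dW: "d ?W = p" using W_props(2)[OF lL gy sl lp'] fadd_diff[OF b] by simp
  have WL: "?W \<in> L" using W_props(1)[OF lL gy sl lp'] .
  have "fac ?W p p = idm (s ?W)" using fac_end[OF WL] dW by simp
  then have "r (snd (prep l y) p p) = s ?W" using S r_id[OF sV[OF WL]] by simp
  also have "\<dots> = r (snd y (p - d l) (p - d l))" using W_props(3)[OF lL gy sl lp'] .
  finally show ?thesis unfolding gvert_def .
qed

lemma prep_BP:
  assumes lL: "l \<in> L" and yb: "y \<in> BPs" and sl: "s l = r (snd y 0 0)"
  shows "prep l y \<in> BPs"
proof -
  have gy: "GM y" using yb bp_GM by blast
  obtain ny where ny: "leq_en ny (fst y)" "\<forall>q i. ny \<le> q \<and> leq_en q (fst y) \<and> enat (q i) = fst y i \<longrightarrow>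
               \<not> (\<exists>l\<in>L. r l = gvert r y q \<and> d l = ebasis i)" using bp_bd[OF yb] by blast
  show ?thesis
  proof (rule bp_I[OF prep_GM[OF lL gy sl], of "d l + ny"])
    show "leq_en (d l + ny) (fst (prep l y))"
      unfolding prep_fst leq_en_plus_iff using ny(1) by (simp add: fun_eq_iff)
  next
    fix q i assume h: "d l + ny \<le> q" "leq_en q (fst (prep l y))" "enat (q i) = fst (prep l y) i"
    have b: "d l \<le> q" using h(1) order_trans fle_add_left by blast
    have q1: "ny \<le> q - d l" unfolding le_fun_def
    proof
      fix x
      have "d l x + ny x \<le> q x" using h(1) unfolding le_fun_def by (metis plus_fun_apply)
      then show "ny x \<le> (q - d l) x" by simp
    qed
    have q2: "leq_en (q - d l) (fst y)" using h(2) unfolding prep_fst leq_en_plus_iff .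
    have q3: "enat ((q - d l) i) = fst y i"
    proof -
      have "enat (q i) = enat (d l i) + fst y i" using h(3) by (simp add: prep_fst)
      then show ?thesis by (cases "fst y i") auto
    qed
    have "\<not> (\<exists>l'\<in>L. r l' = gvert r y (q - d l) \<and> d l' = ebasis i)"
      using ny(2) q1 q2 q3 by blast
    then show "\<not> (\<exists>l'\<in>L. r l' = gvert r (prep l y) q \<and> d l' = ebasis i)"
      using prep_vert[OF lL gy sl b h(2)] by simp
  qed
qed

end



definition mt :: "nat \<Rightarrow> enat \<Rightarrow> nat" where
  "mt x D = (if enat x \<le> D then x else the_enat D)"

lemma meet_mt: "meet_en m D = (\<lambda>i. mt (m i) (D i))"
  by (simp add: meet_en_def mt_def fun_eq_iff)

lemma mt_le_D: "enat (mt x D) \<le> D"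
  by (cases D) (auto simp: mt_def)
lemma mt_le: "mt x D \<le> x"
  by (cases D) (auto simp: mt_def)
lemma mt_id: "enat x \<le> D \<Longrightarrow> mt x D = x"
  by (simp add: mt_def)
lemma mt_zero: "x - mt x D = 0 \<longleftrightarrow> enat x \<le> D"
  by (cases D) (auto simp: mt_def)
lemma mt_zero2: "x \<le> mt x D \<longleftrightarrow> enat x \<le> D"
  by (cases D) (auto simp: mt_def)
lemma mt_mono: "x \<le> y \<Longrightarrow> mt x D \<le> mt y D"
  by (cases D) (auto simp: mt_def)

lemma coord_lr:
  fixes m n e :: nat and D :: enat
  assumes "m \<le> n" "enat m \<le> D"
  shows "mt (e + n - m) (enat e + (D - enat m)) = e + (mt n D - m)"
    "\<not> enat n \<le> D \<Longrightarrow> \<not> enat (e + n - m) \<le> enat e + (D - enat m)"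
proof -
  show "mt (e + n - m) (enat e + (D - enat m)) = e + (mt n D - m)"
    using assms by (cases D) (simp_all add: mt_def)
  show "\<not> enat n \<le> D \<Longrightarrow> \<not> enat (e + n - m) \<le> enat e + (D - enat m)"
    using assms by (cases D) simp_all
qed

lemma coord_rr:
  fixes m n p q :: nat and D E :: enat
  assumes mn: "m \<le> n" and pq: "p \<le> q" and K: "n - mt n D = p - mt p E"
  shows "mt m (enat (mt n D) + (E - enat (mt p E))) = mt m D"
    "mt (n + q - p) (enat (mt n D) + (E - enat (mt p E))) = mt n D + (mt q E - mt p E)"
    "\<not> enat n \<le> D \<Longrightarrow> \<not> enat (n + q - p) \<le> enat (mt n D) + (E - enat (mt p E))"
proof -
  have "(enat n \<le> D \<and> enat p \<le> E \<and> mt n D = n \<and> mt p E = p) \<or>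
        (\<exists>k j. D = enat k \<and> E = enat j \<and> k < n \<and> j < p \<and> mt n D = k \<and> mt p E = j)"
  proof (cases "enat n \<le> D")
    case True
    then have "mt n D = n" by (simp add: mt_def)
    then have "p - mt p E = 0" using K by simp
    then have "enat p \<le> E" using mt_zero[of p E] by simp
    then show ?thesis using True by (simp add: mt_def)
  next
    case False
    then obtain k where k: "D = enat k" "k < n" by (cases D) auto
    then have "mt n D = k" by (simp add: mt_def)
    then have "p - mt p E \<noteq> 0" using K k by simp
    then have "\<not> enat p \<le> E" using mt_zero[of p E] by simp
    then obtain j where j: "E = enat j" "j < p" by (cases E) auto
    then show ?thesis using k by (auto simp: mt_def)
  qed
  note C = this
  show "mt m (enat (mt n D) + (E - enat (mt p E))) = mt m D"
    using C
  proof (elim disjE exE conjE)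
    assume h: "enat n \<le> D" "enat p \<le> E" "mt n D = n" "mt p E = p"
    show ?thesis using h mn by (cases D; cases E) (simp_all add: mt_def)
  next
    fix k j assume h: "D = enat k" "E = enat j" "k < n" "j < p" "mt n D = k" "mt p E = j"
    show ?thesis using h by (simp add: mt_def)
  qed
  show "mt (n + q - p) (enat (mt n D) + (E - enat (mt p E))) = mt n D + (mt q E - mt p E)"
    using C
  proof (elim disjE exE conjE)
    assume h: "enat n \<le> D" "enat p \<le> E" "mt n D = n" "mt p E = p"
    show ?thesis using h pq by (cases E) (simp_all add: mt_def)
  next
    fix k j assume h: "D = enat k" "E = enat j" "k < n" "j < p" "mt n D = k" "mt p E = j"
    show ?thesis using h pq by (simp add: mt_def; arith)
  qed
  show "\<not> enat n \<le> D \<Longrightarrow> \<not> enat (n + q - p) \<le> enat (mt n D) + (E - enat (mt p E))"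
    using C
  proof (elim disjE exE conjE)
    assume h: "enat n \<le> D" "enat p \<le> E" "mt n D = n" "mt p E = p"
    show "\<not> enat n \<le> D \<Longrightarrow> ?thesis" using h by simp
  next
    fix k j assume h: "D = enat k" "E = enat j" "k < n" "j < p" "mt n D = k" "mt p E = j"
    show "\<not> enat n \<le> D \<Longrightarrow> ?thesis" using h pq by simp
  qed
qed

lemma meet_le_D: "leq_en (meet_en m D) D"
  unfolding leq_en_def meet_mt by (simp add: mt_le_D)
lemma meet_le: "meet_en m D \<le> m"
  unfolding le_fun_def meet_mt by (simp add: mt_le)
lemma meet_id: "leq_en m D \<Longrightarrow> meet_en m D = m"
  unfolding leq_en_def meet_mt by (simp add: mt_id fun_eq_iff)
lemma meet_zero: "m - meet_en m D = 0 \<longleftrightarrow> leq_en m D"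
  unfolding leq_en_def meet_mt fun_eq_iff by (simp add: mt_zero2)
lemma meet_mono: "m \<le> n \<Longrightarrow> meet_en m D \<le> meet_en n D"
  unfolding le_fun_def meet_mt by (simp add: mt_mono)

definition pinv :: "('k, 'm) gpath \<times> (('k \<Rightarrow> nat) \<times> ('k \<Rightarrow> nat)) \<Rightarrow> 'm \<times> ('k \<Rightarrow> nat) \<times> ('k \<Rightarrow> nat)"
  where "pinv e = (case e of (x, (m, n)) \<Rightarrow>
     (snd x (meet_en m (fst x)) (meet_en n (fst x)), m - meet_en m (fst x), n - m))"

definition vinv :: "('m \<Rightarrow> 'v) \<Rightarrow> ('k, 'm) gpath \<times> ('k \<Rightarrow> nat) \<Rightarrow> 'v \<times> ('k \<Rightarrow> nat)"
  where "vinv r e = (case e of (x, m) \<Rightarrow> (gvert r x (meet_en m (fst x)), m - meet_en m (fst x)))"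

lemma pinv_simp: "pinv (x, (m, n)) = (snd x (meet_en m (fst x)) (meet_en n (fst x)), m - meet_en m (fst x), n - m)"
  by (simp add: pinv_def)
lemma vinv_simp: "vinv r (x, m) = (gvert r x (meet_en m (fst x)), m - meet_en m (fst x))"
  by (simp add: vinv_def)

context kg begin

abbreviation "PS \<equiv> Pset BPs"
abbreviation "VS \<equiv> Vset BPs"
definition "Pc t = {e \<in> PS. pinv e = t}"
definition "Vc u = {e \<in> VS. vinv r e = u}"
abbreviation "Q \<equiv> pinv ` PS"
abbreviation "U \<equiv> vinv r ` VS"

lemma Prel_eq: "Prel BPs = {(e, e'). e \<in> PS \<and> e' \<in> PS \<and> pinv e = pinv e'}"
  unfolding Prel_def pinv_def by (auto simp: Pset_def)

lemma Vrel_eq: "Vrel r BPs = {(e, e'). e \<in> VS \<and> e' \<in> VS \<and> vinv r e = vinv r e'}"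
  unfolding Vrel_def vinv_def by (auto simp: Vset_def)

lemma pclass_eq: "e \<in> PS \<Longrightarrow> pclass V L r s idm cmp d e = Pc (pinv e)"
  unfolding pclass_def Prel_eq Pc_def by auto

lemma vclass_eq: "e \<in> VS \<Longrightarrow> vclass V L r s idm cmp d e = Vc (vinv r e)"
  unfolding vclass_def Vrel_eq Vc_def by auto

lemma quotP: "PS // Prel BPs = Pc ` Q"
proof -
  have "\<And>x. x \<in> PS \<Longrightarrow> Prel BPs `` {x} = Pc (pinv x)" unfolding Prel_eq Pc_def by auto
  then have "(\<Union>x\<in>PS. {Prel BPs `` {x}}) = (\<Union>x\<in>PS. {Pc (pinv x)})" by auto
  also have "\<dots> = Pc ` Q" by auto
  finally show ?thesis unfolding quotient_def .
qed

lemma quotV: "VS // Vrel r BPs = Vc ` U"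
proof -
  have "\<And>x. x \<in> VS \<Longrightarrow> Vrel r BPs `` {x} = Vc (vinv r x)" unfolding Vrel_eq Vc_def by auto
  then have "(\<Union>x\<in>VS. {Vrel r BPs `` {x}}) = (\<Union>x\<in>VS. {Vc (vinv r x)})" by auto
  also have "\<dots> = Vc ` U" by auto
  finally show ?thesis unfolding quotient_def .
qed

lemma some_Pc: "t \<in> Q \<Longrightarrow> (SOME e. e \<in> Pc t) \<in> PS \<and> pinv (SOME e. e \<in> Pc t) = t"
proof -
  assume "t \<in> Q"
  then obtain e where "e \<in> Pc t" unfolding Pc_def by auto
  then have "(SOME e. e \<in> Pc t) \<in> Pc t" by (rule someI)
  then show ?thesis unfolding Pc_def by auto
qed

lemma some_Vc: "u \<in> U \<Longrightarrow> (SOME e. e \<in> Vc u) \<in> VS \<and> vinv r (SOME e. e \<in> Vc u) = u"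
proof -
  assume "u \<in> U"
  then obtain e where "e \<in> Vc u" unfolding Vc_def by auto
  then have "(SOME e. e \<in> Vc u) \<in> Vc u" by (rule someI)
  then show ?thesis unfolding Vc_def by auto
qed

lemma Pc_inj: "t \<in> Q \<Longrightarrow> t' \<in> Q \<Longrightarrow> Pc t = Pc t' \<Longrightarrow> t = t'"
  unfolding Pc_def by blast

lemma Vc_inj: "u \<in> U \<Longrightarrow> u' \<in> U \<Longrightarrow> Vc u = Vc u' \<Longrightarrow> u = u'"
  unfolding Vc_def by blast

lemma rep_facts:
  assumes e: "(x, (m, n)) \<in> PS"
  defines "Dx \<equiv> fst x"
  defines "\<alpha> \<equiv> snd x (meet_en m (fst x)) (meet_en n (fst x))"
  shows "GM x" "x \<in> BPs" "m \<le> n" "\<not> leq_en n Dx"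
    "\<alpha> \<in> L" "d \<alpha> = meet_en n Dx - meet_en m Dx"
    "r \<alpha> = gvert r x (meet_en m Dx)" "s \<alpha> = gvert r x (meet_en n Dx)"
    "meet_en m Dx \<le> meet_en n Dx"
    "n - meet_en n Dx = (m - meet_en m Dx) + (n - m) - d \<alpha>"
    "d \<alpha> \<le> (m - meet_en m Dx) + (n - m)"
    "(x, n) \<in> VS" "vinv r (x, n) = (s \<alpha>, n - meet_en n Dx)"
    "\<not> leq_en m Dx \<Longrightarrow> (x, m) \<in> VS"
    "vinv r (x, m) = (r \<alpha>, m - meet_en m Dx)"
proof -
  show xb: "x \<in> BPs" and mn: "m \<le> n" and nn: "\<not> leq_en n Dx"
    using e by (auto simp: Pset_def Dx_def)
  show gx: "GM x" using xb bp_GM by blast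
  show mm: "meet_en m Dx \<le> meet_en n Dx" using meet_mono[OF mn] .
  have io: "in_Omega (fst x) (meet_en m Dx) (meet_en n Dx)"
    using mm meet_le_D unfolding Dx_def by (simp add: in_Omega_def)
  have io1: "in_Omega (fst x) (meet_en m Dx) (meet_en m Dx)" "in_Omega (fst x) (meet_en n Dx) (meet_en n Dx)"
    using meet_le_D unfolding Dx_def by (simp_all add: in_Omega_def)
  show aL: "\<alpha> \<in> L" unfolding \<alpha>_def using gm_L(1)[OF gx io] unfolding Dx_def .
  show da: "d \<alpha> = meet_en n Dx - meet_en m Dx" unfolding \<alpha>_def using gm_L(2)[OF gx io] unfolding Dx_def .
  show ra: "r \<alpha> = gvert r x (meet_en m Dx)" unfolding \<alpha>_def gvert_def using gm_L(3)[OF gx io] unfolding Dx_def .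
  show sa: "s \<alpha> = gvert r x (meet_en n Dx)" unfolding \<alpha>_def gvert_def using gm_L(4)[OF gx io] unfolding Dx_def .
  have p1: "meet_en m Dx \<le> m" "meet_en n Dx \<le> n" by (rule meet_le)+
  show "n - meet_en n Dx = (m - meet_en m Dx) + (n - m) - d \<alpha>"
    unfolding da using p1 mm mn by (auto simp: le_fun_def fun_eq_iff)
  show "d \<alpha> \<le> (m - meet_en m Dx) + (n - m)"
    unfolding da le_fun_def
  proof
    fix i
    have "meet_en m Dx i \<le> m i" "meet_en n Dx i \<le> n i" "meet_en m Dx i \<le> meet_en n Dx i" "m i \<le> n i"
      using p1 mm mn by (auto simp: le_fun_def)
    then show "(meet_en n Dx - meet_en m Dx) i \<le> (m - meet_en m Dx + (n - m)) i" by (simp; arith)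
  qed
  show "(x, n) \<in> VS" using xb nn by (simp add: Vset_def Dx_def)
  show "vinv r (x, n) = (s \<alpha>, n - meet_en n Dx)" unfolding vinv_simp sa Dx_def ..
  show "\<not> leq_en m Dx \<Longrightarrow> (x, m) \<in> VS" using xb by (simp add: Vset_def Dx_def)
  show "vinv r (x, m) = (r \<alpha>, m - meet_en m Dx)" unfolding vinv_simp ra Dx_def ..
qed


abbreviation eR :: "'m + (('k, 'm) gpath \<times> ('k \<Rightarrow> nat) \<times> ('k \<Rightarrow> nat)) set
    \<Rightarrow> 'v + (('k, 'm) gpath \<times> ('k \<Rightarrow> nat)) set" where "eR \<equiv> ext_r V L r s idm cmp d"
abbreviation eS :: "'m + (('k, 'm) gpath \<times> ('k \<Rightarrow> nat) \<times> ('k \<Rightarrow> nat)) set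
    \<Rightarrow> 'v + (('k, 'm) gpath \<times> ('k \<Rightarrow> nat)) set" where "eS \<equiv> ext_s V L r s idm cmp d"
abbreviation eI :: "'v + (('k, 'm) gpath \<times> ('k \<Rightarrow> nat)) set
    \<Rightarrow> 'm + (('k, 'm) gpath \<times> ('k \<Rightarrow> nat) \<times> ('k \<Rightarrow> nat)) set" where "eI \<equiv> ext_id V L r s idm cmp d"
abbreviation eC :: "'m + (('k, 'm) gpath \<times> ('k \<Rightarrow> nat) \<times> ('k \<Rightarrow> nat)) set
    \<Rightarrow> 'm + (('k, 'm) gpath \<times> ('k \<Rightarrow> nat) \<times> ('k \<Rightarrow> nat)) set
    \<Rightarrow> 'm + (('k, 'm) gpath \<times> ('k \<Rightarrow> nat) \<times> ('k \<Rightarrow> nat)) set" where "eC \<equiv> ext_comp V L r s idm cmp d"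
lemma fdiff_add2: "(p::'k\<Rightarrow>nat) \<le> q \<Longrightarrow> q - p + p = q"
  by (rule ext) (simp add: le_fun_def)

lemma rep_of:
  assumes "t \<in> Q"
  obtains x m n where "(SOME e. e \<in> Pc t) = (x, (m, n))" "(x, (m, n)) \<in> PS" "pinv (x, (m, n)) = t"
  using some_Pc[OF assms] by (metis prod_cases3)

lemma ext_r_Inr:
  assumes "(\<alpha>, a, len) \<in> Q"
  shows "eR (Inr (Pc (\<alpha>, a, len))) = (if a = 0 then Inl (r \<alpha>) else Inr (Vc (r \<alpha>, a)))"
proof -
  obtain x m n where e: "(SOME e. e \<in> Pc (\<alpha>, a, len)) = (x, (m, n))" and eP: "(x, (m, n)) \<in> PS"
    and pe: "pinv (x, (m, n)) = (\<alpha>, a, len)" using rep_of[OF assms] by blast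
  have al: "\<alpha> = snd x (meet_en m (fst x)) (meet_en n (fst x))" and aa: "a = m - meet_en m (fst x)"
    using pe by (auto simp: pinv_simp)
  note R = rep_facts[OF eP]
  have E: "eR (Inr (Pc (\<alpha>, a, len))) =
     (if leq_en m (fst x) then Inl (gvert r x m) else Inr (vclass V L r s idm cmp d (x, m)))"
    unfolding ext_r_def using e by simp
  show ?thesis
  proof (cases "leq_en m (fst x)")
    case True
    then have "a = 0" using aa meet_zero[of m "fst x"] by simp
    moreover have "gvert r x m = r \<alpha>" using R(7) meet_id[OF True] al by simp
    ultimately show ?thesis using E True by simp
  next
    case False
    then have "a \<noteq> 0" using aa meet_zero[of m "fst x"] by simp
    moreover have "vclass V L r s idm cmp d (x, m) = Vc (r \<alpha>, a)"
      using vclass_eq[OF R(14)[OF False]] R(15) al aa by simp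
    ultimately show ?thesis using E False by simp
  qed
qed

lemma ext_s_Inr:
  assumes "(\<alpha>, a, len) \<in> Q"
  shows "eS (Inr (Pc (\<alpha>, a, len))) = Inr (Vc (s \<alpha>, a + len - d \<alpha>))"
proof -
  obtain x m n where e: "(SOME e. e \<in> Pc (\<alpha>, a, len)) = (x, (m, n))" and eP: "(x, (m, n)) \<in> PS"
    and pe: "pinv (x, (m, n)) = (\<alpha>, a, len)" using rep_of[OF assms] by blast
  have al: "\<alpha> = snd x (meet_en m (fst x)) (meet_en n (fst x))" and aa: "a = m - meet_en m (fst x)"
    and ll: "len = n - m" using pe by (auto simp: pinv_simp)
  note R = rep_facts[OF eP]
  have E: "eS (Inr (Pc (\<alpha>, a, len))) = Inr (vclass V L r s idm cmp d (x, n))"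
    unfolding ext_s_def using e by simp
  show ?thesis unfolding E using vclass_eq[OF R(12)] R(13) R(10) al aa ll by simp
qed

lemma U_fact: "(v, b) \<in> U \<Longrightarrow> v \<in> V"
proof -
  assume "(v, b) \<in> U"
  then obtain x m where xm: "(x, m) \<in> VS" "vinv r (x, m) = (v, b)" by auto
  then have gx: "GM x" using bp_GM by (auto simp: Vset_def)
  have io: "in_Omega (fst x) (meet_en m (fst x)) (meet_en m (fst x))"
    using meet_le_D by (simp add: in_Omega_def)
  have "v = r (snd x (meet_en m (fst x)) (meet_en m (fst x)))"
    using xm(2) by (simp add: vinv_simp gvert_def)
  then show "v \<in> V" using rV gm_L(1)[OF gx io] by simp
qed

lemma ext_id_Inr:
  assumes "(v, b) \<in> U"
  shows "eI (Inr (Vc (v, b))) = Inr (Pc (idm v, b, 0)) \<and> (idm v, b, 0) \<in> Q"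
proof -
  obtain x m where e: "(SOME e. e \<in> Vc (v, b)) = (x, m)" by (metis surj_pair)
  have eV: "(x, m) \<in> VS" and ve: "vinv r (x, m) = (v, b)" using some_Vc[OF assms] e by auto
  have xb: "x \<in> BPs" and nm: "\<not> leq_en m (fst x)" using eV by (auto simp: Vset_def)
  have gx: "GM x" using xb bp_GM by blast
  have eP: "(x, (m, m)) \<in> PS" using xb nm by (simp add: Pset_def)
  have vv: "v = gvert r x (meet_en m (fst x))" and bb: "b = m - meet_en m (fst x)"
    using ve by (auto simp: vinv_simp)
  have "snd x (meet_en m (fst x)) (meet_en m (fst x)) = idm v"
    using gm_id[OF gx meet_le_D] vv by (simp add: gvert_def)
  then have pe: "pinv (x, (m, m)) = (idm v, b, 0)" using bb by (simp add: pinv_simp fdiff_self)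
  have E: "eI (Inr (Vc (v, b))) = Inr (pclass V L r s idm cmp d (x, (m, m)))"
    unfolding ext_id_def using e by simp
  have "(idm v, b, 0) \<in> Q" using eP pe by (intro image_eqI[where f=pinv and x="(x, m, m)"]) auto
  then show ?thesis unfolding E pclass_eq[OF eP] pe by simp
qed


lemma not_leq_en_ex: "\<not> leq_en n D \<Longrightarrow> \<exists>i. \<not> enat (n i) \<le> D i"
  unfolding leq_en_def by blast

lemma ext_comp_lr:
  assumes lL: "l \<in> L" and tQ: "(\<alpha>, a, len) \<in> Q" and a0: "a = 0" and sl: "s l = r \<alpha>"
  shows "eC (Inl l) (Inr (Pc (\<alpha>, a, len))) = Inr (Pc (cmp l \<alpha>, 0, d l + len))
     \<and> (cmp l \<alpha>, 0, d l + len) \<in> Q"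
proof -
  obtain x m n where e: "(SOME e. e \<in> Pc (\<alpha>, a, len)) = (x, (m, n))" and eP: "(x, (m, n)) \<in> PS"
    and pe: "pinv (x, (m, n)) = (\<alpha>, a, len)" using rep_of[OF tQ] by blast
  let ?D = "fst x"
  have al: "\<alpha> = snd x (meet_en m ?D) (meet_en n ?D)" and aa: "a = m - meet_en m ?D"
    and ll: "len = n - m" using pe by (auto simp: pinv_simp)
  note R = rep_facts[OF eP]
  have lm: "leq_en m ?D" using aa a0 meet_zero[of m ?D] by simp
  have mm: "meet_en m ?D = m" using meet_id[OF lm] .
  let ?mn = "meet_en n ?D"
  have m_mn: "m \<le> ?mn" using R(9) mm by simp
  let ?z = "prep l (shift m x)"
  have E: "eC (Inl l) (Inr (Pc (\<alpha>, a, len))) =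
      Inr (pclass V L r s idm cmp d (?z, (0, d l + n - m)))"
    unfolding ext_comp_def using e by simp
  have shB: "shift m x \<in> BPs" using shift_BP[OF R(2) lm] .
  have gsh: "GM (shift m x)" using shB bp_GM by blast
  have io0: "in_Omega (\<lambda>i. ?D i - enat (m i)) 0 0"
    using leq_en_0 by (simp add: in_Omega_def)
  have sh00: "snd (shift m x) 0 0 = snd x m m" using io0 by (simp add: shift_snd)
  have sl': "s l = r (snd (shift m x) 0 0)"
    unfolding sh00 using sl R(7) mm al by (simp add: gvert_def)
  have zB: "?z \<in> BPs" using prep_BP[OF lL shB sl'] .
  have fz: "fst ?z = (\<lambda>i. enat (d l i) + (?D i - enat (m i)))" by (simp add: prep_fst shift_fst)
  have mnm: "m \<le> n" using R(3) .
  have c1: "meet_en (d l + n - m) (fst ?z) = d l + (?mn - m)"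
  proof (rule ext)
    fix i
    have "m i \<le> n i" "enat (m i) \<le> ?D i" using mnm lm by (auto simp: le_fun_def leq_en_def)
    then show "meet_en (d l + n - m) (fst ?z) i = (d l + (?mn - m)) i"
      unfolding fz meet_mt using coord_lr(1)[of "m i" "n i" "?D i" "d l i"] by simp
  qed
  have c2: "\<not> leq_en (d l + n - m) (fst ?z)"
  proof
    assume h: "leq_en (d l + n - m) (fst ?z)"
    obtain i where i: "\<not> enat (n i) \<le> ?D i" using not_leq_en_ex[OF R(4)] by blast
    have "m i \<le> n i" "enat (m i) \<le> ?D i" using mnm lm by (auto simp: le_fun_def leq_en_def)
    then have "\<not> enat (d l i + n i - m i) \<le> enat (d l i) + (?D i - enat (m i))"
      using coord_lr(2)[of "m i" "n i" "?D i" "d l i"] i by simp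
    then show False using h unfolding fz leq_en_def by simp
  qed
  have zP: "(?z, (0, d l + n - m)) \<in> PS" using zB c2 by (simp add: Pset_def fzero_le)
  have c0: "meet_en 0 (fst ?z) = 0" using meet_id[OF leq_en_0] .
  have lb: "leq_en (d l + (?mn - m)) (fst ?z)" using meet_le_D[of "d l + n - m" "fst ?z"] c1 by simp
  have v1: "snd ?z 0 (d l + (?mn - m)) = cmp (fac l 0 (d l)) (snd (shift m x) 0 (d l + (?mn - m) - d l))"
    by (rule prep_val[OF lL gsh sl' fzero_le fle_add_left lb])
  have fl: "fac l 0 (d l) = l" using fac_all[OF lL] .
  have dd: "d l + (?mn - m) - d l = ?mn - m" by (rule ext) simp
  have ios: "in_Omega (\<lambda>i. ?D i - enat (m i)) 0 (?mn - m)"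
    using inO_shift[OF lm, of 0 "?mn - m"] meet_le_D[of n ?D] fdiff_add2[OF m_mn] m_mn
    by (simp add: in_Omega_def fzero_le)
  have v2: "snd (shift m x) 0 (?mn - m) = snd x m ?mn"
    using ios fdiff_add2[OF m_mn] by (simp add: shift_snd)
  have pz: "pinv (?z, (0, d l + n - m)) = (cmp l \<alpha>, 0, d l + len)"
  proof -
    have "snd ?z (meet_en 0 (fst ?z)) (meet_en (d l + n - m) (fst ?z)) = cmp l \<alpha>"
      unfolding c0 c1 v1 fl dd v2 al mm ..
    moreover have "d l + n - m - 0 = d l + len" unfolding ll using mnm
      by (intro ext) (auto simp: le_fun_def)
    ultimately show ?thesis by (simp add: pinv_simp c0)
  qed
  have "(cmp l \<alpha>, 0, d l + len) \<in> Q"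
    using zP pz by (intro image_eqI[where f=pinv and x="(?z, (0, d l + n - m))"]) auto
  then show ?thesis unfolding E pclass_eq[OF zP] pz by simp
qed


lemma ext_comp_rr:
  assumes tQ: "(\<alpha>, a, len) \<in> Q" and tQ': "(\<alpha>', a', len') \<in> Q"
    and sr: "s \<alpha> = r \<alpha>'" and ab: "a + len - d \<alpha> = a'"
  shows "eC (Inr (Pc (\<alpha>, a, len))) (Inr (Pc (\<alpha>', a', len')))
      = Inr (Pc (cmp \<alpha> \<alpha>', a, len + len')) \<and> (cmp \<alpha> \<alpha>', a, len + len') \<in> Q"
proof -
  obtain x m n where e: "(SOME e. e \<in> Pc (\<alpha>, a, len)) = (x, (m, n))" and eP: "(x, (m, n)) \<in> PS"
    and pe: "pinv (x, (m, n)) = (\<alpha>, a, len)" using rep_of[OF tQ] by blast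
  obtain y p q where e': "(SOME e. e \<in> Pc (\<alpha>', a', len')) = (y, (p, q))" and eP': "(y, (p, q)) \<in> PS"
    and pe': "pinv (y, (p, q)) = (\<alpha>', a', len')" using rep_of[OF tQ'] by blast
  let ?D = "fst x" and ?E = "fst y"
  let ?mm = "meet_en m ?D" and ?mn = "meet_en n ?D" and ?p' = "meet_en p ?E" and ?mq = "meet_en q ?E"
  have al: "\<alpha> = snd x ?mm ?mn" and aa: "a = m - ?mm" and ll: "len = n - m"
    using pe by (auto simp: pinv_simp)
  have al': "\<alpha>' = snd y ?p' ?mq" and aa': "a' = p - ?p'" and ll': "len' = q - p"
    using pe' by (auto simp: pinv_simp)
  note R = rep_facts[OF eP] and R' = rep_facts[OF eP']
  have gx: "GM x" and gy: "GM y" using R(1) R'(1) .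
  have K: "n - ?mn = p - ?p'" using R(10) al aa ll ab aa' by simp
  have vv: "gvert r x ?mn = gvert r y ?p'" using R(8) R'(7) al al' sr by simp
  let ?u = "snd x 0 ?mn"
  have iou: "in_Omega ?D 0 ?mn" using meet_le_D by (simp add: in_Omega_def fzero_le)
  have uL: "?u \<in> L" and du: "d ?u = ?mn" and su: "s ?u = gvert r x ?mn"
    using gm_L[OF gx iou] by (auto simp: gvert_def)
  have lp': "leq_en ?p' ?E" by (rule meet_le_D)
  have shB: "shift ?p' y \<in> BPs" using shift_BP[OF R'(2) lp'] .
  have gsh: "GM (shift ?p' y)" using shB bp_GM by blast
  have io0: "in_Omega (\<lambda>i. ?E i - enat (?p' i)) 0 0"
    using leq_en_0 by (simp add: in_Omega_def)
  have sh00: "snd (shift ?p' y) 0 0 = snd y ?p' ?p'" using io0 by (simp add: shift_snd)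
  have sl': "s ?u = r (snd (shift ?p' y) 0 0)"
    unfolding sh00 su vv by (simp add: gvert_def)
  let ?z = "prep ?u (shift ?p' y)"
  have E: "eC (Inr (Pc (\<alpha>, a, len))) (Inr (Pc (\<alpha>', a', len'))) =
      Inr (pclass V L r s idm cmp d (?z, (m, n + q - p)))"
    unfolding ext_comp_def using e e' by simp
  have zB: "?z \<in> BPs" using prep_BP[OF uL shB sl'] .
  have fz: "fst ?z = (\<lambda>i. enat (?mn i) + (?E i - enat (?p' i)))"
    by (simp add: prep_fst shift_fst du)
  have mnm: "m \<le> n" and pq: "p \<le> q" using R(3) R'(3) .
  have Ki: "\<And>i. n i - mt (n i) (?D i) = p i - mt (p i) (?E i)"
    using K unfolding meet_mt fun_eq_iff by simp
  have pw: "\<And>i. m i \<le> n i \<and> p i \<le> q i" using mnm pq by (auto simp: le_fun_def)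
  have c1: "meet_en m (fst ?z) = ?mm"
  proof (rule ext)
    fix i
    show "meet_en m (fst ?z) i = ?mm i"
      unfolding fz unfolding meet_mt using coord_rr(1)[of "m i" "n i" "p i" "q i" "?D i" "?E i"] pw Ki by simp
  qed
  have c2: "meet_en (n + q - p) (fst ?z) = ?mn + (?mq - ?p')"
  proof (rule ext)
    fix i
    show "meet_en (n + q - p) (fst ?z) i = (?mn + (?mq - ?p')) i"
      unfolding fz unfolding meet_mt using coord_rr(2)[of "m i" "n i" "p i" "q i" "?D i" "?E i"] pw Ki by simp
  qed
  have c3: "\<not> leq_en (n + q - p) (fst ?z)"
  proof
    assume h: "leq_en (n + q - p) (fst ?z)"
    obtain i where i: "\<not> enat (n i) \<le> ?D i" using not_leq_en_ex[OF R(4)] by blast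
    have "\<not> enat (n i + q i - p i) \<le> enat (?mn i) + (?E i - enat (?p' i))"
      using coord_rr(3)[of "m i" "n i" "p i" "q i" "?D i" "?E i"] pw Ki i by (simp add: meet_mt)
    then show False using h unfolding fz leq_en_def by simp
  qed
  have mle: "m \<le> n + q - p" unfolding le_fun_def
  proof
    fix i show "m i \<le> (n + q - p) i" using pw[of i] by (simp; arith)
  qed
  have zP: "(?z, (m, n + q - p)) \<in> PS" using zB c3 mle by (simp add: Pset_def)
  have lb: "leq_en (?mn + (?mq - ?p')) (fst ?z)" using meet_le_D[of "n + q - p" "fst ?z"] c2 by simp
  have v1: "snd ?z ?mm (?mn + (?mq - ?p')) = cmp (fac ?u ?mm (d ?u)) (snd (shift ?p' y) 0 (?mn + (?mq - ?p') - d ?u))"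
    by (rule prep_val[OF uL gsh sl']) (use R(9) du lb in \<open>auto simp: fle_add_left\<close>)
  have f1: "fac ?u ?mm (d ?u) = \<alpha>" unfolding du al by (rule gm_fac[OF gx R(9) order_refl meet_le_D])
  have dd: "?mn + (?mq - ?p') - d ?u = ?mq - ?p'" unfolding du by (rule ext) simp
  have pmq: "?p' \<le> ?mq" using meet_mono[OF pq] .
  have ios: "in_Omega (\<lambda>i. ?E i - enat (?p' i)) 0 (?mq - ?p')"
    using inO_shift[OF lp', of 0 "?mq - ?p'"] meet_le_D[of q ?E] fdiff_add2[OF pmq] pmq
    by (simp add: in_Omega_def fzero_le)
  have v2: "snd (shift ?p' y) 0 (?mq - ?p') = \<alpha>'"
    using ios fdiff_add2[OF pmq] al' by (simp add: shift_snd)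
  have pz: "pinv (?z, (m, n + q - p)) = (cmp \<alpha> \<alpha>', a, len + len')"
  proof -
    have "snd ?z (meet_en m (fst ?z)) (meet_en (n + q - p) (fst ?z)) = cmp \<alpha> \<alpha>'"
      unfolding c1 c2 v1 f1 dd v2 ..
    moreover have "n + q - p - m = len + len'" unfolding ll ll' using pw
      by (intro ext) (auto simp: le_fun_def)
    ultimately show ?thesis by (simp add: pinv_simp c1 aa)
  qed
  have "(cmp \<alpha> \<alpha>', a, len + len') \<in> Q"
    using zP pz by (intro image_eqI[where f=pinv and x="(?z, (m, n + q - p))"]) auto
  then show ?thesis unfolding E pclass_eq[OF zP] pz by simp
qed


lemma Q_facts:
  assumes "(\<alpha>, a, len) \<in> Q"
  shows "\<alpha> \<in> L" "d \<alpha> \<le> a + len" "(s \<alpha>, a + len - d \<alpha>) \<in> U" "a \<noteq> 0 \<Longrightarrow> (r \<alpha>, a) \<in> U"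
proof -
  obtain x m n where eP: "(x, (m, n)) \<in> PS" and pe: "pinv (x, (m, n)) = (\<alpha>, a, len)"
    using rep_of[OF assms] by blast
  have al: "\<alpha> = snd x (meet_en m (fst x)) (meet_en n (fst x))" and aa: "a = m - meet_en m (fst x)"
    and ll: "len = n - m" using pe by (auto simp: pinv_simp)
  note R = rep_facts[OF eP]
  show "\<alpha> \<in> L" using R(5) al by simp
  show "d \<alpha> \<le> a + len" using R(11) al aa ll by simp
  show "(s \<alpha>, a + len - d \<alpha>) \<in> U"
    using R(12) R(13) R(10) al aa ll by (metis image_eqI)
  show "a \<noteq> 0 \<Longrightarrow> (r \<alpha>, a) \<in> U"
  proof -
    assume "a \<noteq> 0"
    then have "\<not> leq_en m (fst x)" using aa meet_zero[of m "fst x"] by simp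
    then show ?thesis using R(14) R(15) al aa by (metis image_eqI)
  qed
qed

lemma U_facts:
  assumes "(v, b) \<in> U"
  shows "v \<in> V" "b \<noteq> 0"
proof -
  show "v \<in> V" using U_fact[OF assms] .
  obtain x m where xm: "(x, m) \<in> VS" "vinv r (x, m) = (v, b)" using assms by auto
  then have "\<not> leq_en m (fst x)" "b = m - meet_en m (fst x)" by (auto simp: Vset_def vinv_simp)
  then show "b \<noteq> 0" using meet_zero[of m "fst x"] by simp
qed

abbreviation "eOb \<equiv> ext_obj V L r s idm cmp d"
abbreviation "eMor \<equiv> ext_mor V L r s idm cmp d"

lemma eR_Inl: "eR (Inl l) = Inl (r l)" by (simp add: ext_r_def)
lemma eS_Inl: "eS (Inl l) = Inl (s l)" by (simp add: ext_s_def)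
lemma eI_Inl: "eI (Inl v) = Inl (idm v)" by (simp add: ext_id_def)
lemma eC_Inl: "eC (Inl l) (Inl l') = Inl (cmp l l')" by (simp add: ext_comp_def)

lemma eOb_eq: "eOb = V <+> Vc ` U" unfolding ext_obj_def quotV ..
lemma eMor_eq: "eMor = L <+> Pc ` Q" unfolding ext_mor_def quotP ..

lemma Mor_cases:
  assumes "f \<in> eMor"
  obtains l where "l \<in> L" "f = Inl l"
   | \<alpha> a len where "(\<alpha>, a, len) \<in> Q" "f = Inr (Pc (\<alpha>, a, len))"
proof -
  have "f \<in> Inl ` L \<or> f \<in> Inr ` (Pc ` Q)" using assms unfolding eMor_eq Plus_def by auto
  then show thesis
  proof
    assume "f \<in> Inl ` L" then show thesis using that(1) by blast
  next
    assume "f \<in> Inr ` (Pc ` Q)"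
    then obtain t where t: "t \<in> Q" "f = Inr (Pc t)" by blast
    obtain \<alpha> a len where "t = (\<alpha>, a, len)" by (cases t) auto
    then show thesis using that(2) t by blast
  qed
qed

lemma Ob_cases:
  assumes "o' \<in> eOb"
  obtains v where "v \<in> V" "o' = Inl v"
   | v b where "(v, b) \<in> U" "o' = Inr (Vc (v, b))"
  using assms unfolding eOb_eq by (auto elim!: PlusE)

lemma compat_lr:
  assumes "(\<alpha>, a, len) \<in> Q" "eS (Inl l) = eR (Inr (Pc (\<alpha>, a, len)))"
  shows "a = 0" "s l = r \<alpha>"
  using assms(2) unfolding eS_Inl ext_r_Inr[OF assms(1)] by (auto split: if_splits)

lemma compat_rl:
  assumes "(\<alpha>, a, len) \<in> Q"
  shows "eS (Inr (Pc (\<alpha>, a, len))) \<noteq> eR (Inl l)"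
  unfolding eR_Inl ext_s_Inr[OF assms(1)] by simp

lemma compat_rr:
  assumes "(\<alpha>, a, len) \<in> Q" "(\<alpha>', a', len') \<in> Q"
    "eS (Inr (Pc (\<alpha>, a, len))) = eR (Inr (Pc (\<alpha>', a', len')))"
  shows "a' \<noteq> 0" "s \<alpha> = r \<alpha>'" "a + len - d \<alpha> = a'"
proof -
  have h: "Inr (Vc (s \<alpha>, a + len - d \<alpha>)) = (if a' = 0 then Inl (r \<alpha>') else Inr (Vc (r \<alpha>', a')))"
    using assms(3) unfolding ext_s_Inr[OF assms(1)] ext_r_Inr[OF assms(2)] .
  show a0: "a' \<noteq> 0" using h by (auto split: if_splits)
  then have "Vc (s \<alpha>, a + len - d \<alpha>) = Vc (r \<alpha>', a')" using h by simp
  then have "(s \<alpha>, a + len - d \<alpha>) = (r \<alpha>', a')"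
    using Vc_inj Q_facts(3)[OF assms(1)] Q_facts(4)[OF assms(2) a0] by blast
  then show "s \<alpha> = r \<alpha>'" "a + len - d \<alpha> = a'" by auto
qed


lemma Inl_Plus[simp]: "Inl a \<in> A <+> B \<longleftrightarrow> a \<in> A" by auto
lemma Inr_Plus[simp]: "Inr b \<in> A <+> B \<longleftrightarrow> b \<in> B" by auto

lemma arA1: "(0::'k\<Rightarrow>nat) + (e + len) - (e + da) = 0 + len - da" by (rule ext) simp

lemma arA2: "(da::'k\<Rightarrow>nat) \<le> a + len \<Longrightarrow> a + (len + len') - (da + da') = (a + len - da) + len' - da'"
proof (rule ext)
  fix i assume "da \<le> a + len"
  then have "da i \<le> a i + len i" by (auto simp: le_fun_def)
  then show "(a + (len + len') - (da + da')) i = (a + len - da + len' - da') i" by simp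
qed

lemma eR_Inr_Ob:
  assumes "(\<alpha>, a, len) \<in> Q"
  shows "eR (Inr (Pc (\<alpha>, a, len))) \<in> eOb" "eS (Inr (Pc (\<alpha>, a, len))) \<in> eOb"
  unfolding ext_r_Inr[OF assms] ext_s_Inr[OF assms] eOb_eq
  using Q_facts[OF assms] rV by auto

lemma C1: "\<forall>f\<in>eMor. eR f \<in> eOb \<and> eS f \<in> eOb"
proof
  fix f assume "f \<in> eMor"
  then show "eR f \<in> eOb \<and> eS f \<in> eOb"
  proof (cases rule: Mor_cases)
    case (1 l) then show ?thesis unfolding 1(2) eR_Inl eS_Inl eOb_eq by (auto simp: rV sV)
  next
    case (2 \<alpha> a len) then show ?thesis using eR_Inr_Ob by blast
  qed
qed

lemma C2: "\<forall>o'\<in>eOb. eI o' \<in> eMor \<and> eR (eI o') = o' \<and> eS (eI o') = o'"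
proof
  fix o' assume "o' \<in> eOb"
  then show "eI o' \<in> eMor \<and> eR (eI o') = o' \<and> eS (eI o') = o'"
  proof (cases rule: Ob_cases)
    case (1 v) then show ?thesis unfolding 1(2) eI_Inl eR_Inl eS_Inl eMor_eq by (auto simp: idL r_id s_id)
  next
    case (2 v b)
    note I = ext_id_Inr[OF 2(1)]
    have vV: "v \<in> V" and b0: "b \<noteq> 0" using U_facts[OF 2(1)] by auto
    show ?thesis unfolding 2(2) conjunct1[OF I] ext_r_Inr[OF conjunct2[OF I]] ext_s_Inr[OF conjunct2[OF I]]
      using conjunct2[OF I] vV b0 by (simp add: eMor_eq r_id s_id d_id)
  qed
qed

lemma C3: "\<forall>f\<in>eMor. \<forall>g\<in>eMor. eS f = eR g \<longrightarrow>
         eC f g \<in> eMor \<and> eR (eC f g) = eR f \<and> eS (eC f g) = eS g"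
proof (intro ballI impI)
  fix f g assume f: "f \<in> eMor" and g: "g \<in> eMor" and fg: "eS f = eR g"
  show "eC f g \<in> eMor \<and> eR (eC f g) = eR f \<and> eS (eC f g) = eS g"
  proof (cases rule: Mor_cases[OF f])
    case (1 l)
    note fl = 1
    show ?thesis
    proof (cases rule: Mor_cases[OF g])
      case (1 l')
      have "s l = r l'" using fg fl 1 by (simp add: eS_Inl eR_Inl)
      then show ?thesis using fl 1 cmpL[OF fl(1) 1(1)] by (simp add: eC_Inl eR_Inl eS_Inl eMor_eq r_cmp s_cmp)
    next
      case (2 \<alpha> a len)
      have c: "a = 0" "s l = r \<alpha>" using compat_lr[OF 2(1)] fg fl 2 by auto
      note C = ext_comp_lr[OF fl(1) 2(1) c]
      have aL: "\<alpha> \<in> L" using Q_facts(1)[OF 2(1)] .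
      show ?thesis unfolding fl(2) 2(2) conjunct1[OF C]
        ext_r_Inr[OF conjunct2[OF C]] ext_s_Inr[OF conjunct2[OF C]] ext_s_Inr[OF 2(1)] eR_Inl
        using conjunct2[OF C] c aL fl(1) by (simp add: eMor_eq r_cmp s_cmp d_cmp arA1)
    qed
  next
    case (2 \<alpha> a len)
    note ft = 2
    show ?thesis
    proof (cases rule: Mor_cases[OF g])
      case (1 l')
      have "eS f = Inr (Vc (s \<alpha>, a + len - d \<alpha>))" unfolding ft(2) by (rule ext_s_Inr[OF ft(1)])
      moreover have "eR g = Inl (r l')" unfolding 1(2) by (rule eR_Inl)
      ultimately have False using fg by simp
      then show ?thesis ..
    next
      case (2 \<alpha>' a' len')
      have c: "a' \<noteq> 0" "s \<alpha> = r \<alpha>'" "a + len - d \<alpha> = a'"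
        using compat_rr[OF ft(1) 2(1)] fg ft 2 by auto
      note C = ext_comp_rr[OF ft(1) 2(1) c(2,3)]
      have aL: "\<alpha> \<in> L" "\<alpha>' \<in> L" using Q_facts(1)[OF ft(1)] Q_facts(1)[OF 2(1)] .
      have dl: "d \<alpha> \<le> a + len" using Q_facts(2)[OF ft(1)] .
      show ?thesis unfolding ft(2) 2(2) conjunct1[OF C]
        ext_r_Inr[OF conjunct2[OF C]] ext_s_Inr[OF conjunct2[OF C]] ext_s_Inr[OF 2(1)]
        ext_r_Inr[OF ft(1)]
        using conjunct2[OF C] c aL by (simp add: eMor_eq r_cmp s_cmp d_cmp arA2[OF dl])
    qed
  qed
qed


lemma C5: "\<forall>f\<in>eMor. eC (eI (eR f)) f = f \<and> eC f (eI (eS f)) = f"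
proof
  fix f assume "f \<in> eMor"
  then show "eC (eI (eR f)) f = f \<and> eC f (eI (eS f)) = f"
  proof (cases rule: Mor_cases)
    case (1 l) then show ?thesis unfolding 1(2) eR_Inl eS_Inl eI_Inl eC_Inl by (simp add: id_l id_r)
  next
    case (2 \<alpha> a len)
    note t = 2(1)
    have aL: "\<alpha> \<in> L" using Q_facts(1)[OF t] .
    have rV': "r \<alpha> \<in> V" "s \<alpha> \<in> V" using rV[OF aL] sV[OF aL] .
    have left: "eC (eI (eR f)) f = f"
    proof (cases "a = 0")
      case True
      have E: "eI (eR f) = Inl (idm (r \<alpha>))" unfolding 2(2) ext_r_Inr[OF t] using True by (simp add: eI_Inl)
      have C: "eC (Inl (idm (r \<alpha>))) (Inr (Pc (\<alpha>, a, len))) = Inr (Pc (cmp (idm (r \<alpha>)) \<alpha>, 0, d (idm (r \<alpha>)) + len))"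
        using ext_comp_lr[OF idL[OF rV'(1)] t True] s_id[OF rV'(1)] by simp
      show ?thesis unfolding E unfolding 2(2) C using id_l[OF aL] d_id[OF rV'(1)] True by simp
    next
      case False
      have U1: "(r \<alpha>, a) \<in> U" using Q_facts(4)[OF t False] .
      note I = ext_id_Inr[OF U1]
      have E: "eI (eR f) = Inr (Pc (idm (r \<alpha>), a, 0))" unfolding 2(2) ext_r_Inr[OF t] using False I by simp
      have C: "eC (Inr (Pc (idm (r \<alpha>), a, 0))) (Inr (Pc (\<alpha>, a, len))) = Inr (Pc (cmp (idm (r \<alpha>)) \<alpha>, a, 0 + len))"
        using ext_comp_rr[OF conjunct2[OF I] t] s_id[OF rV'(1)] d_id[OF rV'(1)] by simp
      show ?thesis unfolding E unfolding 2(2) C using id_l[OF aL] by simp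
    qed
    have right: "eC f (eI (eS f)) = f"
    proof -
      have U1: "(s \<alpha>, a + len - d \<alpha>) \<in> U" using Q_facts(3)[OF t] .
      note I = ext_id_Inr[OF U1]
      have E: "eI (eS f) = Inr (Pc (idm (s \<alpha>), a + len - d \<alpha>, 0))" unfolding 2(2) ext_s_Inr[OF t] using I by simp
      have C: "eC (Inr (Pc (\<alpha>, a, len))) (Inr (Pc (idm (s \<alpha>), a + len - d \<alpha>, 0))) = Inr (Pc (cmp \<alpha> (idm (s \<alpha>)), a, len + 0))"
        using ext_comp_rr[OF t conjunct2[OF I]] r_id[OF rV'(2)] by simp
      show ?thesis unfolding E unfolding 2(2) C using id_r[OF aL] by simp
    qed
    show ?thesis using left right by simp
  qed
qed

lemma C4: "\<forall>f\<in>eMor. \<forall>g\<in>eMor. \<forall>h\<in>eMor. eS f = eR g \<and> eS g = eR h \<longrightarrow>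
         eC (eC f g) h = eC f (eC g h)"
proof (intro ballI impI)
  fix f g h assume f: "f \<in> eMor" and g: "g \<in> eMor" and h: "h \<in> eMor"
    and fgh: "eS f = eR g \<and> eS g = eR h"
  have fg: "eS f = eR g" and gh: "eS g = eR h" using fgh by auto
  have noRL: "\<And>\<alpha> a len l. (\<alpha>, a, len) \<in> Q \<Longrightarrow> eS (Inr (Pc (\<alpha>, a, len))) \<noteq> eR (Inl l)"
    using ext_s_Inr eR_Inl by simp
  show "eC (eC f g) h = eC f (eC g h)"
  proof (cases rule: Mor_cases[OF f])
    case (1 l1)
    note F = 1
    show ?thesis
    proof (cases rule: Mor_cases[OF g])
      case (1 l2)
      note G = 1
      have s12: "s l1 = r l2" using fg F G by (simp add: eS_Inl eR_Inl)
      show ?thesis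
      proof (cases rule: Mor_cases[OF h])
        case (1 l3)
        have s23: "s l2 = r l3" using gh G 1 by (simp add: eS_Inl eR_Inl)
        show ?thesis unfolding F(2) G(2) 1(2) eC_Inl using assoc[OF F(1) G(1) 1(1) s12 s23] by simp
      next
        case (2 \<alpha> a len)
        have c: "a = 0" "s l2 = r \<alpha>" using compat_lr[OF 2(1)] gh G 2 by auto
        have l12: "cmp l1 l2 \<in> L" "s (cmp l1 l2) = r \<alpha>" "d (cmp l1 l2) = d l1 + d l2" "r (cmp l1 l2) = r l1"
          using cmpL[OF F(1) G(1) s12] s_cmp[OF F(1) G(1) s12] d_cmp[OF F(1) G(1) s12] r_cmp[OF F(1) G(1) s12] c
          by auto
        note C23 = ext_comp_lr[OF G(1) 2(1) c]
        have aL: "\<alpha> \<in> L" using Q_facts(1)[OF 2(1)] .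
        have s1: "s l1 = r (cmp l2 \<alpha>)" using r_cmp[OF G(1) aL c(2)] s12 by simp
        have L1: "eC (Inl (cmp l1 l2)) (Inr (Pc (\<alpha>, a, len))) = Inr (Pc (cmp (cmp l1 l2) \<alpha>, 0, d (cmp l1 l2) + len))"
          using conjunct1[OF ext_comp_lr[OF l12(1) 2(1) c(1) l12(2)]] .
        have R1: "eC (Inl l1) (Inr (Pc (cmp l2 \<alpha>, 0, d l2 + len))) = Inr (Pc (cmp l1 (cmp l2 \<alpha>), 0, d l1 + (d l2 + len)))"
          using ext_comp_lr[OF F(1) conjunct2[OF C23] refl s1] by simp
        show ?thesis unfolding F(2) G(2) 2(2) eC_Inl L1 conjunct1[OF C23] R1
          using assoc[OF F(1) G(1) aL s12 c(2)] l12(3) by (simp add: add.assoc)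
      qed
    next
      case (2 \<alpha>2 a2 len2)
      note G = 2
      have c12: "a2 = 0" "s l1 = r \<alpha>2" using compat_lr[OF G(1)] fg F G by auto
      have a2L: "\<alpha>2 \<in> L" using Q_facts(1)[OF G(1)] .
      show ?thesis
      proof (cases rule: Mor_cases[OF h])
        case (1 l3)
        have False using gh G(2) 1(2) noRL[OF G(1)] by simp
        then show ?thesis ..
      next
        case (2 \<alpha>3 a3 len3)
        note H = 2
        have c23: "a3 \<noteq> 0" "s \<alpha>2 = r \<alpha>3" "a2 + len2 - d \<alpha>2 = a3"
          using compat_rr[OF G(1) H(1)] gh G H by auto
        note C12 = ext_comp_lr[OF F(1) G(1) c12]
        note C23 = ext_comp_rr[OF G(1) H(1) c23(2,3)]
        have sc: "s (cmp l1 \<alpha>2) = r \<alpha>3" "d (cmp l1 \<alpha>2) = d l1 + d \<alpha>2"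
          using s_cmp[OF F(1) a2L c12(2)] d_cmp[OF F(1) a2L c12(2)] c23(2) by auto
        have ar: "0 + (d l1 + len2) - d (cmp l1 \<alpha>2) = a3"
          unfolding sc(2) arA1 using c23(3) c12(1) by simp
        have L1: "eC (Inr (Pc (cmp l1 \<alpha>2, 0, d l1 + len2))) (Inr (Pc (\<alpha>3, a3, len3)))
            = Inr (Pc (cmp (cmp l1 \<alpha>2) \<alpha>3, 0, d l1 + len2 + len3))"
          using ext_comp_rr[OF conjunct2[OF C12] H(1) sc(1) ar] by simp
        have a3L: "\<alpha>3 \<in> L" using Q_facts(1)[OF H(1)] .
        have s1: "s l1 = r (cmp \<alpha>2 \<alpha>3)" using r_cmp[OF a2L a3L c23(2)] c12(2) by simp
        have R1: "eC (Inl l1) (Inr (Pc (cmp \<alpha>2 \<alpha>3, a2, len2 + len3)))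
            = Inr (Pc (cmp l1 (cmp \<alpha>2 \<alpha>3), 0, d l1 + (len2 + len3)))"
          using ext_comp_lr[OF F(1) conjunct2[OF C23] c12(1) s1] by simp
        show ?thesis unfolding F(2) G(2) H(2) conjunct1[OF C12] L1 conjunct1[OF C23] R1
          using assoc[OF F(1) a2L a3L c12(2) c23(2)] by (simp add: add.assoc)
      qed
    qed
  next
    case (2 \<alpha>1 a1 len1)
    note F = 2
    show ?thesis
    proof (cases rule: Mor_cases[OF g])
      case (1 l2)
      have False using fg F(2) 1(2) noRL[OF F(1)] by simp
      then show ?thesis ..
    next
      case (2 \<alpha>2 a2 len2)
      note G = 2
      show ?thesis
      proof (cases rule: Mor_cases[OF h])
        case (1 l3)
        have False using gh G(2) 1(2) noRL[OF G(1)] by simp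
        then show ?thesis ..
      next
        case (2 \<alpha>3 a3 len3)
        note H = 2
        have c12: "a2 \<noteq> 0" "s \<alpha>1 = r \<alpha>2" "a1 + len1 - d \<alpha>1 = a2"
          using compat_rr[OF F(1) G(1)] fg F G by auto
        have c23: "a3 \<noteq> 0" "s \<alpha>2 = r \<alpha>3" "a2 + len2 - d \<alpha>2 = a3"
          using compat_rr[OF G(1) H(1)] gh G H by auto
        have aL: "\<alpha>1 \<in> L" "\<alpha>2 \<in> L" "\<alpha>3 \<in> L" using Q_facts(1)[OF F(1)] Q_facts(1)[OF G(1)] Q_facts(1)[OF H(1)] .
        have dl: "d \<alpha>1 \<le> a1 + len1" using Q_facts(2)[OF F(1)] .
        note C12 = ext_comp_rr[OF F(1) G(1) c12(2,3)]
        note C23 = ext_comp_rr[OF G(1) H(1) c23(2,3)]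
        have sc: "s (cmp \<alpha>1 \<alpha>2) = r \<alpha>3" "d (cmp \<alpha>1 \<alpha>2) = d \<alpha>1 + d \<alpha>2"
          using s_cmp[OF aL(1,2) c12(2)] d_cmp[OF aL(1,2) c12(2)] c23(2) by auto
        have ar: "a1 + (len1 + len2) - d (cmp \<alpha>1 \<alpha>2) = a3"
          unfolding sc(2) arA2[OF dl] using c12(3) c23(3) by simp
        have L1: "eC (Inr (Pc (cmp \<alpha>1 \<alpha>2, a1, len1 + len2))) (Inr (Pc (\<alpha>3, a3, len3)))
            = Inr (Pc (cmp (cmp \<alpha>1 \<alpha>2) \<alpha>3, a1, len1 + len2 + len3))"
          using ext_comp_rr[OF conjunct2[OF C12] H(1) sc(1) ar] by simp
        have s1: "s \<alpha>1 = r (cmp \<alpha>2 \<alpha>3)" using r_cmp[OF aL(2,3) c23(2)] c12(2) by simp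
        have R1: "eC (Inr (Pc (\<alpha>1, a1, len1))) (Inr (Pc (cmp \<alpha>2 \<alpha>3, a2, len2 + len3)))
            = Inr (Pc (cmp \<alpha>1 (cmp \<alpha>2 \<alpha>3), a1, len1 + (len2 + len3)))"
          using ext_comp_rr[OF F(1) conjunct2[OF C23] s1 c12(3)] by simp
        show ?thesis unfolding F(2) G(2) H(2) conjunct1[OF C12] L1 conjunct1[OF C23] R1
          using assoc[OF aL c12(2) c23(2)] by (simp add: add.assoc)
      qed
    qed
  qed
qed

theorem cat_ext: "category eOb eMor eR eS eI eC"
  unfolding category_def using C1 C2 C3 C4 C5 by blast

end

theorem lemma3p21:
  fixes V :: "'v set" and L :: "'m set" and r s :: "'m \<Rightarrow> 'v" and idm :: "'v \<Rightarrow> 'm"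
    and cmp :: "'m \<Rightarrow> 'm \<Rightarrow> 'm" and d :: "'m \<Rightarrow> ('k::finite \<Rightarrow> nat)"
  assumes "kgraph V L r s idm cmp d"
  shows "category (ext_obj V L r s idm cmp d) (ext_mor V L r s idm cmp d)
           (ext_r V L r s idm cmp d) (ext_s V L r s idm cmp d)
           (ext_id V L r s idm cmp d) (ext_comp V L r s idm cmp d)"
  by (rule kg.cat_ext) (rule kg.intro[OF assms])

end
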